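(* Suppose there exists a positive integer $n$ such that $[n]$ admits no $3$-good partition, and let $n$ be the smallest such integer. Then $n\ge 845$, and $n$ belongs to the set $$N_o=\{n: n\equiv 2 \pmod 3\}\cap\{n : 3^t+1<n<(3^{t+1}+1)/2 \text{ for some integer } t\ge 4\}.$$
   Context: A partition of $[n]=\{1,\dots,n\}$ into nonempty parts is called $3$-good if every part has at most $3$ elements and the sum of the elements of every part is a power of $3$, i.e. equals $3^s$ for some integer $s\ge 0$ (so the singleton $\{1\}$ is allowed). The bound $n\ge 845$ rests on a computer verification that $[n]$ admits a $3$-good partition for all $n\le 844$. *)

theory Defs
  imports Main "HOL-Library.Disjoint_Sets"
begin

definition three_good :: "nat \<Rightarrow> nat set set \<Rightarrow> bool" where
  "three_good n P \<longleftrightarrow> partition_on {1..n} P \<and>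
     (\<forall>B\<in>P. card B \<le> 3 \<and> (\<exists>s::nat. \<Sum>B = 3 ^ s))"

definition admits_three_good :: "nat \<Rightarrow> bool" where
  "admits_three_good n \<longleftrightarrow> (\<exists>P. three_good n P)"

end

theory Submission
  imports Defs
begin

definition goodblk :: "nat set \<Rightarrow> bool" where
  "goodblk B \<longleftrightarrow> card B \<le> 3 \<and> (\<exists>s::nat. \<Sum>B = 3 ^ s)"

definition goodset :: "nat set \<Rightarrow> bool" where
  "goodset S \<longleftrightarrow> (\<exists>P. partition_on S P \<and> (\<forall>B\<in>P. goodblk B))"

lemma admits_iff: "admits_three_good n \<longleftrightarrow> goodset {1..n}"
  unfolding admits_three_good_def three_good_def goodset_def goodblk_def by blast

lemma goodblk_ne: "goodblk B \<Longrightarrow> B \<noteq> {}"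
  unfolding goodblk_def by (metis sum.empty zero_less_power zero_less_numeral less_irrefl)

lemma goodset_empty: "goodset {}"
  unfolding goodset_def by (rule exI[of _ "{}"]) (simp add: partition_on_empty)

lemma goodset_blk: "goodblk B \<Longrightarrow> goodset B"
  unfolding goodset_def
  by (rule exI[of _ "{B}"]) (simp add: partition_on_space goodblk_ne)

lemma goodset_union:
  assumes "goodset A" "goodset B" "A \<inter> B = {}"
  shows "goodset (A \<union> B)"
proof -
  obtain P where P: "partition_on A P" "\<forall>X\<in>P. goodblk X" using assms(1) goodset_def by blast
  obtain Q where Q: "partition_on B Q" "\<forall>X\<in>Q. goodblk X" using assms(2) goodset_def by blast
  have "partition_on (A \<union> B) (P \<union> Q)"
    using P(1) Q(1) assms(3) unfolding partition_on_def
    by (auto intro!: disjoint_union)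
  then show ?thesis using P Q unfolding goodset_def by blast
qed

lemma goodset_UN:
  assumes "\<And>i. i \<in> I \<Longrightarrow> goodblk (F i)"
    and "\<And>i j. i \<in> I \<Longrightarrow> j \<in> I \<Longrightarrow> F i \<noteq> F j \<Longrightarrow> F i \<inter> F j = {}"
  shows "goodset (\<Union>i\<in>I. F i)"
  unfolding goodset_def
proof (intro exI conjI)
  show "partition_on (\<Union>i\<in>I. F i) (F ` I)"
    using assms goodblk_ne unfolding partition_on_def disjoint_def by fastforce
  show "\<forall>B\<in>F ` I. goodblk B" using assms by blast
qed

lemma goodset_cong: "goodset A \<Longrightarrow> A = B \<Longrightarrow> goodset B" by simp

lemma goodset_pairs:
  assumes "J \<subseteq> {y. 2*y < c}" and "c = 3^s"
  shows "goodset (\<Union>y\<in>J. {y, c - y})"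
proof (rule goodset_UN)
  fix y assume "y \<in> J"
  then have "2*y < c" using assms by auto
  then show "goodblk {y, c - y}" unfolding goodblk_def using assms(2)
    by (auto simp: card_insert_if)
next
  fix i j assume "i \<in> J" "j \<in> J" "{i, c - i} \<noteq> {j, c - j}"
  then show "{i, c - i} \<inter> {j, c - j} = {}" using assms(1) by auto
qed

definition zsF :: "nat \<Rightarrow> nat \<Rightarrow> nat \<Rightarrow> nat set" where
  "zsF C m j = (if j \<le> m then {C+j, C+m+j, C-m-2*j}
     else if j < 2*m then {C-m-1-2*(j-m), C-m+(j-m), C+2*m+1+(j-m)}
     else {C-m, C-m-1, C+2*m+1})"

definition zsG :: "nat \<Rightarrow> nat \<Rightarrow> nat \<Rightarrow> nat" where
  "zsG C m x = (if x + m + 1 < C then (if even (C - m - x) then (C - m - x) div 2 else m + (C - m - 1 - x) div 2)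
     else if x < C then (if x + m + 1 = C \<or> x + m = C then 2*m else m + (x + m - C))
     else if x \<le> C + m then x - C
     else if x \<le> C + 2*m then x - C - m
     else if x = C + 2*m + 1 then 2*m
     else m + (x - C - 2*m - 1))"

lemma g1: "3*m < C \<Longrightarrow> 1 \<le> j \<Longrightarrow> j \<le> m \<Longrightarrow> zsG C m (C+j) = j"
  by (simp add: zsG_def)
lemma g2: "3*m < C \<Longrightarrow> 1 \<le> j \<Longrightarrow> j \<le> m \<Longrightarrow> zsG C m (C+m+j) = j"
  by (simp add: zsG_def)
lemma g3: "3*m < C \<Longrightarrow> 1 \<le> j \<Longrightarrow> j \<le> m \<Longrightarrow> zsG C m (C-m-2*j) = j"
proof -
  assume a: "3*m < C" "1 \<le> j" "j \<le> m"
  have e: "C - m - (C - m - 2*j) = 2*j" using a by simp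
  have h: "(C-m-2*j) + m + 1 < C" using a by linarith
  show ?thesis unfolding zsG_def e if_P[OF h] using a by simp
qed
lemma g4: "3*m < C \<Longrightarrow> 1 \<le> k \<Longrightarrow> k < m \<Longrightarrow> zsG C m (C-m-1-2*k) = m + k"
proof -
  assume a: "3*m < C" "1 \<le> k" "k < m"
  have e: "C - m - (C - m - 1 - 2*k) = 2*k+1" "C - m - 1 - (C - m - 1 - 2*k) = 2*k" using a by simp_all
  have h: "(C-m-1-2*k) + m + 1 < C" using a by linarith
  show ?thesis unfolding zsG_def e if_P[OF h] using a by simp
qed
lemma g5: "3*m < C \<Longrightarrow> 1 \<le> k \<Longrightarrow> k < m \<Longrightarrow> zsG C m (C-m+k) = m + k"
  by (simp add: zsG_def)
lemma g6: "3*m < C \<Longrightarrow> 1 \<le> k \<Longrightarrow> k < m \<Longrightarrow> zsG C m (C+2*m+1+k) = m + k"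
  by (simp add: zsG_def)
lemma g7: "3*m < C \<Longrightarrow> 1 \<le> m \<Longrightarrow> zsG C m (C-m) = 2*m"
  by (simp add: zsG_def)
lemma g8: "3*m < C \<Longrightarrow> 1 \<le> m \<Longrightarrow> zsG C m (C-m-1) = 2*m"
  by (simp add: zsG_def)
lemma g9: "3*m < C \<Longrightarrow> 1 \<le> m \<Longrightarrow> zsG C m (C+2*m+1) = 2*m"
  by (simp add: zsG_def)

lemma zsF_inv:
  assumes "3*m < C" "1 \<le> j" "j \<le> 2*m" "x \<in> zsF C m j"
  shows "zsG C m x = j"
proof (cases "j \<le> m")
  case True
  then show ?thesis using assms g1 g2 g3 unfolding zsF_def by auto
next
  case False
  show ?thesis
  proof (cases "j < 2*m")
    case True
    define k where "k = j - m"
    have jk: "j = m + k" "1 \<le> k" "k < m" using False True k_def by auto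
    have "x \<in> {C-m-1-2*k, C-m+k, C+2*m+1+k}" using assms(4) False True unfolding zsF_def jk by simp
    then show ?thesis using g4 g5 g6 jk assms(1) by auto
  next
    case F2: False
    then have "j = 2*m" "1 \<le> m" using assms False by auto
    moreover have "x \<in> {C-m, C-m-1, C+2*m+1}" using assms(4) False F2 unfolding zsF_def by simp
    ultimately show ?thesis using g7 g8 g9 assms(1) by auto
  qed
qed

lemma zsF_good:
  assumes "3*m < C" "1 \<le> j" "j \<le> 2*m" "3*C = 3^s"
  shows "goodblk (zsF C m j)"
proof -
  have c: "card (zsF C m j) \<le> 3" unfolding zsF_def by (auto intro!: card_insert_le_m1)
  have "\<Sum>(zsF C m j) = 3*C"
  proof (cases "j \<le> m")
    case True
    have z: "zsF C m j = {C+j, C+m+j, C-m-2*j}" using True unfolding zsF_def by simp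
    have d: "C+j \<noteq> C+m+j" "C+j \<noteq> C-m-2*j" "C+m+j \<noteq> C-m-2*j" using assms(1-3) True by linarith+
    have "\<Sum>{C+j, C+m+j, C-m-2*j} = (C+j) + ((C+m+j) + (C-m-2*j))" using d by simp
    also have "\<dots> = 3*C" using assms(1-3) True by linarith
    finally show ?thesis using z by simp
  next
    case False
    show ?thesis
    proof (cases "j < 2*m")
      case True
      define k where "k = j - m"
      have jk: "j = m + k" "1 \<le> k" "k < m" using False True k_def by auto
      have "zsF C m j = {C-m-1-2*k, C-m+k, C+2*m+1+k}" using False True unfolding zsF_def jk by simp
      moreover have "\<Sum>{C-m-1-2*k, C-m+k, C+2*m+1+k} = 3*C"
      proof -
        have d: "C-m-1-2*k \<noteq> C-m+k" "C-m-1-2*k \<noteq> C+2*m+1+k" "C-m+k \<noteq> C+2*m+1+k" using jk assms(1) by linarith+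
        have "\<Sum>{C-m-1-2*k, C-m+k, C+2*m+1+k} = (C-m-1-2*k) + ((C-m+k) + (C+2*m+1+k))" using d by simp
        also have "\<dots> = 3*C" using jk assms(1) by linarith
        finally show ?thesis .
      qed
      ultimately show ?thesis by simp
    next
      case F2: False
      have z: "zsF C m j = {C-m, C-m-1, C+2*m+1}" using False F2 unfolding zsF_def by simp
      have d: "C-m \<noteq> C-m-1" "C-m \<noteq> C+2*m+1" "C-m-1 \<noteq> C+2*m+1" using assms(1) False F2 assms(3) by linarith+
      have "\<Sum>{C-m, C-m-1, C+2*m+1} = (C-m) + ((C-m-1) + (C+2*m+1))" using d by simp
      also have "\<dots> = 3*C" using assms(1) False F2 assms(3) by linarith
      finally show ?thesis using z by simp
    qed
  qed
  then show ?thesis using c assms(4) unfolding goodblk_def by auto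
qed

lemma zs_mem: 
  assumes "3*m < C" "1 \<le> j" "j \<le> 2*m" "x \<in> zsF C m j"
  shows "x \<in> {C-3*m..C+3*m} - {C}"
proof (cases "j \<le> m")
  case True
  then show ?thesis using assms unfolding zsF_def by auto
next
  case False
  show ?thesis
  proof (cases "j < 2*m")
    case True
    define k where "k = j - m"
    have jk: "j = m + k" "1 \<le> k" "k < m" using False True k_def by auto
    have "x \<in> {C-m-1-2*k, C-m+k, C+2*m+1+k}" using assms(4) False True unfolding zsF_def jk by simp
    then show ?thesis using jk assms(1) by auto
  next
    case F2: False
    then have "j = 2*m" "1 \<le> m" using assms False by auto
    moreover have "x \<in> {C-m, C-m-1, C+2*m+1}" using assms(4) False F2 unfolding zsF_def by simp
    ultimately show ?thesis using assms(1) by auto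
  qed
qed

lemma zs_cover:
  assumes "3*m < C" "x \<in> {C-3*m..C+3*m}" "x \<noteq> C"
  shows "\<exists>j\<in>{1..2*m}. x \<in> zsF C m j"
proof -
  have r: "C - 3*m \<le> x" "x \<le> C + 3*m" using assms by auto
  consider "x + m + 1 < C" | "x + m + 1 = C" | "x + m = C" | "x < C" "C < x + m" | "C < x" "x \<le> C + m"
    | "C + m < x" "x \<le> C + 2*m" | "x = C + 2*m + 1" | "C + 2*m + 1 < x" using assms(3) by linarith
  then show ?thesis
  proof cases
    case 1
    define d where "d = C - m - x"
    have d: "2 \<le> d" "d \<le> 2*m" "x = C - m - d" using 1 r d_def by auto
    show ?thesis
    proof (cases "even d")
      case True
      then obtain j where j: "d = 2*j" by blast
      have "1 \<le> j" "j \<le> m" "j \<le> 2*m" using d j by auto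
      moreover have "x = C - m - 2*j" using d j by simp
      ultimately show ?thesis unfolding zsF_def by (intro bexI[of _ j]) auto
    next
      case False
      then obtain k where k: "d = 2*k + 1" using oddE by blast
      have kk: "1 \<le> k" "k < m" using d k by auto
      have jj: "\<not> m + k \<le> m" "m + k < 2*m" using kk by auto
      have "x = C - m - 1 - 2*k" using d k by simp
      then have "x \<in> zsF C m (m+k)" unfolding zsF_def using jj by simp
      then show ?thesis using kk by (intro bexI[of _ "m+k"]) auto
    qed
  next
    case 2
    then have "1 \<le> m" using r by linarith
    moreover have "x = C - m - 1" using 2 by linarith
    ultimately show ?thesis unfolding zsF_def by (intro bexI[of _ "2*m"]) auto
  next
    case 3
    then have "1 \<le> m" using assms(3) by linarith
    moreover have "x = C - m" using 3 by linarith
    ultimately show ?thesis unfolding zsF_def by (intro bexI[of _ "2*m"]) auto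
  next
    case 4
    define k where "k = x + m - C"
    have kk: "1 \<le> k" "k < m" using 4 k_def by auto
    have jj: "\<not> m + k \<le> m" "m + k < 2*m" using kk by auto
    have "x = C - m + k" using 4 k_def assms(1) by arith
    then have "x \<in> zsF C m (m+k)" unfolding zsF_def using jj by simp
    then show ?thesis using kk by (intro bexI[of _ "m+k"]) auto
  next
    case 5
    define j where "j = x - C"
    have "1 \<le> j" "j \<le> m" "x = C + j" using 5 j_def by auto
    then show ?thesis unfolding zsF_def by (intro bexI[of _ j]) auto
  next
    case 6
    define j where "j = x - C - m"
    have "1 \<le> j" "j \<le> m" "x = C + m + j" using 6 j_def by auto
    then show ?thesis unfolding zsF_def by (intro bexI[of _ j]) auto
  next
    case 7
    then have "1 \<le> m" using r by linarith
    then show ?thesis unfolding zsF_def using 7 by (intro bexI[of _ "2*m"]) auto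
  next
    case 8
    define k where "k = x - C - 2*m - 1"
    have kk: "1 \<le> k" "k < m" using 8 r k_def by auto
    have jj: "\<not> m + k \<le> m" "m + k < 2*m" using kk by auto
    have "x = C + 2*m + 1 + k" using 8 k_def by simp
    then have "x \<in> zsF C m (m+k)" unfolding zsF_def using jj by simp
    then show ?thesis using kk by (intro bexI[of _ "m+k"]) auto
  qed
qed

lemma goodset_ZS:
  assumes "3*m < C" "3*C = 3^s"
  shows "goodset ({C-3*m..C+3*m} - {C})"
proof -
  have "goodset (\<Union>j\<in>{1..2*m}. zsF C m j)"
  proof (rule goodset_UN)
    fix i assume "i \<in> {1..2*m}"
    then show "goodblk (zsF C m i)" using zsF_good assms by auto
  next
    fix i j assume ij: "i \<in> {1..2*m}" "j \<in> {1..2*m}" "zsF C m i \<noteq> zsF C m j"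
    then have "i \<noteq> j" by auto
    show "zsF C m i \<inter> zsF C m j = {}"
    proof (rule ccontr)
      assume "zsF C m i \<inter> zsF C m j \<noteq> {}"
      then obtain x where "x \<in> zsF C m i" "x \<in> zsF C m j" by auto
      then have "zsG C m x = i" "zsG C m x = j" using zsF_inv assms(1) ij by auto
      then show False using \<open>i \<noteq> j\<close> by simp
    qed
  qed
  moreover have "(\<Union>j\<in>{1..2*m}. zsF C m j) = {C-3*m..C+3*m} - {C}"
    using zs_mem[OF assms(1)] zs_cover[OF assms(1)] by fastforce
  ultimately show ?thesis by simp
qed

definition pw3 :: "nat \<Rightarrow> bool" where
  "pw3 x \<longleftrightarrow> x = 1 \<or> x = 3 \<or> x = 9 \<or> x = 27 \<or> x = 81 \<or> x = 243 \<or> x = 729 \<or> x = 2187 \<or> x = 6561"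

lemma pw3_ex: "pw3 x \<Longrightarrow> \<exists>s. x = 3^s"
  unfolding pw3_def
  apply (elim disjE)
  apply (rule exI[of _ 0]; simp)
  apply (rule exI[of _ 1]; simp)
  apply (rule exI[of _ 2]; simp)
  apply (rule exI[of _ 3]; simp)
  apply (rule exI[of _ 4]; simp)
  apply (rule exI[of _ 5]; simp)
  apply (rule exI[of _ 6]; simp)
  apply (rule exI[of _ 7]; simp)
  apply (rule exI[of _ 8]; simp)
  done

lemma odd_pow3: "odd ((3::nat)^s)" by simp

datatype step = Blk "nat list" | Dec | PR nat | TR nat

fun run :: "nat \<Rightarrow> nat list \<Rightarrow> nat list \<Rightarrow> step list \<Rightarrow> nat option" where
  "run a R X [] = (if R = [] \<and> (\<forall>x\<in>set X. a < x) then Some a else None)"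
| "run a R X (Blk B # st) = (if B \<noteq> [] \<and> distinct B \<and> length B \<le> 3 \<and> pw3 (sum_list B) \<and>
      (\<forall>b\<in>set B. (b \<in> set R \<or> (0 < b \<and> b \<le> a)) \<and> b \<notin> set X)
    then run a (filter (\<lambda>r. r \<notin> set B) R) (filter (\<lambda>b. b \<le> a) B @ X) st else None)"
| "run a R X (Dec # st) = (if a \<in> set X \<and> a \<notin> set R then run (a - 1) R (removeAll a X) st else None)"
| "run a R X (PR c # st) = (if pw3 c \<and> a < c \<and> c < 2*a \<and> (\<forall>r\<in>set R. a < r \<and> r \<notin> set X)
    then run (c - a - 1) (R @ map (\<lambda>x. c - x) (filter (\<lambda>x. c - a \<le> x \<and> x \<le> a \<and> c - x \<notin> set X) X))
       (filter (\<lambda>x. x < c - a) X) st else None)"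
| "run a R X (TR C # st) = (if pw3 C \<and> C < a \<and> (a - C) mod 3 = 1 \<and> a - C < C \<and>
      (\<forall>x\<in>set X. x < C - (a - C) \<or> a < x) \<and> (\<forall>r\<in>set R. a < r)
    then run (C - (a - C) - 1) R X st else None)"

definition St :: "nat \<Rightarrow> nat list \<Rightarrow> nat list \<Rightarrow> nat set" where
  "St a R X = {1..a} \<union> set R - set X"

lemma goodblk_list:
  assumes "B \<noteq> []" "distinct B" "length B \<le> 3" "pw3 (sum_list B)"
  shows "goodblk (set B)"
proof -
  have "\<Sum>(set B) = sum_list B" using assms(2) sum.distinct_set_conv_list[of B "\<lambda>x. x"] by simp
  then have "\<exists>s. \<Sum>(set B) = 3^s" using pw3_ex[OF assms(4)] by simp
  moreover have "card (set B) \<le> 3" using assms(2,3) by (simp add: distinct_card)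
  ultimately show ?thesis unfolding goodblk_def by simp
qed

lemma sound_Blk:
  assumes "B \<noteq> []" "distinct B" "length B \<le> 3" "pw3 (sum_list B)"
    "\<forall>b\<in>set B. (b \<in> set R \<or> (0 < b \<and> b \<le> a)) \<and> b \<notin> set X"
    "goodset (St a (filter (\<lambda>r. r \<notin> set B) R) (filter (\<lambda>b. b \<le> a) B @ X))"
  shows "goodset (St a R X)"
proof -
  have e: "St a R X = St a (filter (\<lambda>r. r \<notin> set B) R) (filter (\<lambda>b. b \<le> a) B @ X) \<union> set B"
    using assms(5) unfolding St_def by auto
  have d: "St a (filter (\<lambda>r. r \<notin> set B) R) (filter (\<lambda>b. b \<le> a) B @ X) \<inter> set B = {}"
    unfolding St_def by auto
  show ?thesis unfolding e
    by (rule goodset_union[OF assms(6) goodset_blk[OF goodblk_list[OF assms(1-4)]] d])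
qed

lemma sound_Dec:
  assumes "a \<in> set X" "a \<notin> set R" "goodset (St (a - 1) R (removeAll a X))"
  shows "goodset (St a R X)"
proof -
  have "St a R X = St (a - 1) R (removeAll a X)"
    unfolding St_def
    apply (rule set_eqI)
    subgoal for z using assms(1,2) by (cases "z = a") auto
    done
  then show ?thesis using assms(3) by simp
qed

lemma sound_PR:
  assumes cs: "c = 3^s" "a < c" "c < 2*a" "\<forall>r\<in>set R. a < r \<and> r \<notin> set X"
    "goodset (St (c - a - 1) (R @ map (\<lambda>x. c - x) (filter (\<lambda>x. c - a \<le> x \<and> x \<le> a \<and> c - x \<notin> set X) X))
       (filter (\<lambda>x. x < c - a) X))" (is "goodset ?S'")
  shows "goodset (St a R X)"
proof -
  have oc: "odd c" using assms(1) by simp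
  define J where "J = {y. c - a \<le> y \<and> 2*y < c \<and> y \<notin> set X \<and> c - y \<notin> set X}"
  define Pr where "Pr = (\<Union>y\<in>J. {y, c - y})"
  have gP: "goodset Pr" unfolding Pr_def by (rule goodset_pairs[OF _ assms(1)]) (auto simp: J_def)
  have memS': "z \<in> ?S' \<longleftrightarrow> ((1 \<le> z \<and> z \<le> c - a - 1) \<or> z \<in> set R \<or>
      (\<exists>x\<in>set X. c - a \<le> x \<and> x \<le> a \<and> c - x \<notin> set X \<and> z = c - x)) \<and> \<not> (z \<in> set X \<and> z < c - a)" for z
    unfolding St_def by auto
  have memP: "z \<in> Pr \<longleftrightarrow> (\<exists>y\<in>J. z = y \<or> z = c - y)" for z
    unfolding Pr_def by auto
  have eq: "St a R X = ?S' \<union> Pr"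
  proof (rule set_eqI, rule iffI)
    fix z assume zS: "z \<in> St a R X"
    then have zX: "z \<notin> set X" and zc: "(1 \<le> z \<and> z \<le> a) \<or> z \<in> set R" unfolding St_def by auto
    show "z \<in> ?S' \<union> Pr"
    proof (cases "z \<in> set R")
      case True then show ?thesis using zX memS' by auto
    next
      case False
      then have z1: "1 \<le> z" "z \<le> a" using zc by auto
      show ?thesis
      proof (cases "z < c - a")
        case True then show ?thesis using zX z1 memS' by auto
      next
        case F1: False
        show ?thesis
        proof (cases "c - z \<in> set X")
          case True
          have "c - (c - z) = z" using z1 assms(2) by simp
          then have "\<exists>x\<in>set X. c - a \<le> x \<and> x \<le> a \<and> c - x \<notin> set X \<and> z = c - x"
            using True zX F1 z1 assms(2) by (intro bexI[of _ "c - z"]) auto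
          then show ?thesis using memS' zX by auto
        next
          case F2: False
          show ?thesis
          proof (cases "2*z < c")
            case True
            then have "z \<in> J" using F1 zX F2 unfolding J_def by auto
            then show ?thesis using memP by auto
          next
            case False
            then have "2*z > c" using oc by (metis dvd_triv_left linorder_neqE_nat not_less)
            then have "c - z \<in> J" "z = c - (c - z)" using F1 F2 zX z1 assms(2) unfolding J_def by auto
            then show ?thesis using memP by blast
          qed
        qed
      qed
    qed
  next
    fix z assume "z \<in> ?S' \<union> Pr"
    then show "z \<in> St a R X"
    proof
      assume zS': "z \<in> ?S'"
      then have nx: "\<not> (z \<in> set X \<and> z < c - a)" using memS' by blast
      from zS' consider "1 \<le> z \<and> z \<le> c - a - 1" | "z \<in> set R"
        | "\<exists>x\<in>set X. c - a \<le> x \<and> x \<le> a \<and> c - x \<notin> set X \<and> z = c - x" using memS' by blast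
      then show ?thesis
      proof cases
        case 1 then show ?thesis using nx assms(3) unfolding St_def by auto
      next
        case 2 then show ?thesis using assms(4) unfolding St_def by auto
      next
        case 3
        then obtain x where "x \<in> set X" "c - a \<le> x" "x \<le> a" "c - x \<notin> set X" "z = c - x" by blast
        then show ?thesis using assms(2) unfolding St_def by auto
      qed
    next
      assume "z \<in> Pr"
      then obtain y where y: "y \<in> J" "z = y \<or> z = c - y" using memP by blast
      then show ?thesis using assms(2,3) unfolding J_def St_def by auto
    qed
  qed
  have dj: "?S' \<inter> Pr = {}"
  proof (rule ccontr)
    assume "?S' \<inter> Pr \<noteq> {}"
    then obtain z where z: "z \<in> ?S'" "z \<in> Pr" by blast
    then obtain y where y: "y \<in> J" "z = y \<or> z = c - y" using memP by blast
    have zr: "c - a \<le> z" "z \<le> a" "z \<notin> set X" "c - z \<notin> set X"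
      using y assms(2,3) unfolding J_def by auto
    from z(1) consider "1 \<le> z \<and> z \<le> c - a - 1" | "z \<in> set R"
        | "\<exists>x\<in>set X. c - a \<le> x \<and> x \<le> a \<and> c - x \<notin> set X \<and> z = c - x" using memS' by blast
    then show False
    proof cases
      case 1 then show False using zr by auto
    next
      case 2 then show False using zr assms(4) by auto
    next
      case 3
      then obtain x where "x \<in> set X" "x \<le> a" "z = c - x" by blast
      then show False using zr assms(2) by auto
    qed
  qed
  show ?thesis unfolding eq by (rule goodset_union[OF assms(5) gP dj])
qed

lemma goodset_TRI:
  assumes "3*m + 1 < C" "C = 3^s"
  shows "goodset {C - (3*m+1) .. C + (3*m+1)}"
proof -
  have a: "goodset ({C-3*m..C+3*m} - {C})" by (rule goodset_ZS[of m C "Suc s"]) (use assms in auto)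
  have d: "C - (3*m+1) \<noteq> C" "C - (3*m+1) \<noteq> C + (3*m+1)" "C \<noteq> C + (3*m+1)" using assms by auto
  have "\<Sum>{C - (3*m+1), C, C + (3*m+1)} = (C - (3*m+1)) + (C + (C + (3*m+1)))" using d by simp
  also have "\<dots> = 3^(Suc s)" using assms by simp
  finally have sm: "\<Sum>{C - (3*m+1), C, C + (3*m+1)} = 3^(Suc s)" .
  have "card {C - (3*m+1), C, C + (3*m+1)} \<le> 3" by (auto intro!: card_insert_le_m1)
  then have "goodblk {C - (3*m+1), C, C + (3*m+1)}" unfolding goodblk_def using sm by blast
  then have b: "goodset {C - (3*m+1), C, C + (3*m+1)}" by (rule goodset_blk)
  have "goodset (({C-3*m..C+3*m} - {C}) \<union> {C - (3*m+1), C, C + (3*m+1)})"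
    by (rule goodset_union[OF a b]) (use assms(1) in auto)
  moreover have "({C-3*m..C+3*m} - {C}) \<union> {C - (3*m+1), C, C + (3*m+1)} = {C - (3*m+1) .. C + (3*m+1)}"
    using assms(1) by auto
  ultimately show ?thesis by simp
qed

lemma sound_TR:
  assumes cs: "C = 3^s" "C < a" "(a - C) mod 3 = 1" "a - C < C" "\<forall>x\<in>set X. x < C - (a - C) \<or> a < x"
    "\<forall>r\<in>set R. a < r" "goodset (St (C - (a - C) - 1) R X)"
  shows "goodset (St a R X)"
proof -
  define m where "m = (a - C) div 3"
  have "(a - C) div 3 * 3 + (a - C) mod 3 = a - C" by (rule div_mult_mod_eq)
  then have am: "a - C = 3*m + 1" using assms(3) m_def by linarith
  have gZ: "goodset {C - (3*m+1) .. C + (3*m+1)}" by (rule goodset_TRI[OF _ assms(1)]) (use am assms(4) in auto)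
  have e1: "C + (3*m+1) = a" using am assms(2) by auto
  have eq: "St a R X = St (C - (a - C) - 1) R X \<union> {C - (3*m+1) .. C + (3*m+1)}"
    unfolding St_def e1 am using assms(4,5,6) am by auto
  have dj: "St (C - (a - C) - 1) R X \<inter> {C - (3*m+1) .. C + (3*m+1)} = {}"
    unfolding St_def e1 am using assms(6) by auto
  show ?thesis unfolding eq by (rule goodset_union[OF assms(7) gZ dj])
qed

lemma run_sound: "run a R X st = Some b \<Longrightarrow> goodset {1..b} \<Longrightarrow> goodset (St a R X)"
proof (induction a R X st rule: run.induct)
  case (1 a R X)
  then have "St a R X = {1..b}" unfolding St_def by (auto split: if_splits)
  then show ?case using 1 by simp
next
  case (2 a R X B st)
  then show ?case using sound_Blk by (auto split: if_splits)
next
  case (3 a R X st)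
  then show ?case using sound_Dec by (auto split: if_splits)
next
  case (4 a R X c st)
  have cond: "pw3 c \<and> a < c \<and> c < 2*a \<and> (\<forall>r\<in>set R. a < r \<and> r \<notin> set X)"
    using "4.prems"(1) by (simp split: if_splits)
  obtain s where cs: "c = 3^s" using pw3_ex cond by blast
  have g: "goodset (St (c - a - 1) (R @ map (\<lambda>x. c - x) (filter (\<lambda>x. c - a \<le> x \<and> x \<le> a \<and> c - x \<notin> set X) X))
       (filter (\<lambda>x. x < c - a) X))"
    using "4.IH" cond "4.prems" by (simp split: if_splits)
  show ?case by (rule sound_PR[OF cs _ _ _ g]) (use cond in auto)
next
  case (5 a R X C st)
  have cond: "pw3 C \<and> C < a \<and> (a - C) mod 3 = 1 \<and> a - C < C \<and>
      (\<forall>x\<in>set X. x < C - (a - C) \<or> a < x) \<and> (\<forall>r\<in>set R. a < r)"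
    using "5.prems"(1) by (simp split: if_splits)
  obtain s where cs: "C = 3^s" using pw3_ex cond by blast
  have g: "goodset (St (C - (a - C) - 1) R X)"
    using "5.IH" cond "5.prems" by (simp split: if_splits)
  show ?case by (rule sound_TR[OF cs _ _ _ _ _ g]) (use cond in auto)
qed

lemma run_admits: "run n [] [] st = Some b \<Longrightarrow> admits_three_good b \<Longrightarrow> admits_three_good n"
  using run_sound[of n "[]" "[]" st b] unfolding admits_iff St_def by simp

lemma admits0: "admits_three_good 0"
  unfolding admits_iff using goodset_empty by simp

lemma ex_t: "1 \<le> (n::nat) \<Longrightarrow> \<exists>t. 3^t \<le> n \<and> n < 3^Suc t"
proof (induction n rule: less_induct)
  case (less n)
  show ?case
  proof (cases "n < 3")
    case True then show ?thesis using less.prems by (intro exI[of _ 0]) auto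
  next
    case False
    then have "1 \<le> n div 3" "n div 3 < n" by auto
    then obtain t where t: "3^t \<le> n div 3" "n div 3 < 3^Suc t" using less.IH by blast
    have dm: "n div 3 * 3 + n mod 3 = n" by (rule div_mult_mod_eq)
    have "n mod 3 < 3" by simp
    have "3^Suc t \<le> n" using t(1) dm by simp
    moreover have "n < 3^Suc (Suc t)" using t(2) dm \<open>n mod 3 < 3\<close> by simp
    ultimately show ?thesis by blast
  qed
qed

lemma reduce:
  assumes "0 < n" and IH: "\<And>k. k < n \<Longrightarrow> admits_three_good k"
  shows "admits_three_good n \<or> (\<exists>t. 3^t + 1 < n \<and> 2*n \<le> 3^Suc t \<and> (n - 3^t) mod 3 = 2 \<and> n mod 3 = 2)"
proof -
  obtain t where t: "3^t \<le> n" "n < 3^Suc t" using ex_t[of n] assms(1) by auto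
  define c where "c = (3::nat)^Suc t"
  define C where "C = (3::nat)^t"
  define h where "h = n - C"
  have nC: "n = C + h" using t(1) C_def h_def by simp
  have c3: "c = 3*C" unfolding c_def C_def by simp
  show ?thesis
  proof (cases "c < 2*n")
    case True
    have "goodset (St n [] [])"
    proof (rule sound_PR[OF c_def])
      show "n < c" "c < 2*n" using t(2) True c_def by auto
      show "\<forall>r\<in>set []. n < r \<and> r \<notin> set []" by simp
      have "c - n - 1 < n" using True by linarith
      then show "goodset (St (c - n - 1) ([] @ map (\<lambda>x. c - x) (filter (\<lambda>x. c - n \<le> x \<and> x \<le> n \<and> c - x \<notin> set []) []))
       (filter (\<lambda>x. x < c - n) []))" using IH unfolding St_def admits_iff by simp
    qed
    then show ?thesis unfolding St_def admits_iff by simp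
  next
    case False
    then have h2: "2*h \<le> C" using nC c3 by linarith
    have Cp: "0 < C" unfolding C_def by simp
    consider "h mod 3 = 0" | "h mod 3 = 1" | "h mod 3 = 2" by linarith
    then show ?thesis
    proof cases
      case 1
      define m where "m = h div 3"
      have hm: "h = 3*m" using 1 m_def by auto
      have m3: "3*m < C" using h2 hm Cp by linarith
      define L where "L = C - 3*m"
      have CL: "C = L + 3*m" "1 \<le> L" using m3 L_def by auto
      have nL: "n = L + 6*m" using nC hm CL by simp
      have g1: "goodset ({C-3*m..C+3*m} - {C})" by (rule goodset_ZS[OF m3, of "Suc t"]) (simp add: C_def)
      have "{L..L+6*m} - {L+3*m} = {C-3*m..C+3*m} - {C}" using CL by auto
      then have g1': "goodset ({L..L+6*m} - {L+3*m})" using g1 by simp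
      have g2: "goodset {L+3*m}" by (rule goodset_blk) (auto simp: goodblk_def C_def CL(1)[symmetric])
      have e1: "({L..L+6*m} - {L+3*m}) \<union> {L+3*m} = {L..L+6*m}" by auto
      have "goodset (({L..L+6*m} - {L+3*m}) \<union> {L+3*m})" by (rule goodset_union[OF g1' g2]) simp
      then have g12: "goodset {L..L+6*m}" unfolding e1 .
      have g3: "goodset {1..L - 1}"
      proof -
        have "L - 1 < n" using nL CL by linarith
        then show ?thesis using IH admits_iff by blast
      qed
      have e2: "{1..L - 1} \<union> {L..L+6*m} = {1..L+6*m}" using CL(2) by auto
      have d2: "{1..L - 1} \<inter> {L..L+6*m} = {}" by auto
      have "goodset ({1..L - 1} \<union> {L..L+6*m})" by (rule goodset_union[OF g3 g12 d2])
      then have "goodset {1..n}" unfolding e2 nL .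
      then show ?thesis unfolding admits_iff by simp
    next
      case 2
      have "goodset (St n [] [])"
      proof (rule sound_TR[OF C_def])
        have "h mod 3 \<le> h" by (rule mod_less_eq_dividend)
        then have "1 \<le> h" using 2 by linarith
        then show "C < n" "(n - C) mod 3 = 1" "n - C < C" using nC 2 h2 Cp by simp_all
        show "\<forall>x\<in>set []. x < C - (n - C) \<or> n < x" "\<forall>r\<in>set []. n < r" by auto
        have "C - (n - C) - 1 < n" using nC Cp by linarith
        then show "goodset (St (C - (n - C) - 1) [] [])" using IH unfolding St_def admits_iff by simp
      qed
      then show ?thesis unfolding St_def admits_iff by simp
    next
      case 3
      have t1: "1 \<le> t"
      proof (rule ccontr)
        assume "\<not> 1 \<le> t" then have "t = 0" by simp
        then have "C = 1" unfolding C_def by simp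
        moreover have "h mod 3 \<le> h" by (rule mod_less_eq_dividend)
        ultimately show False using h2 3 by linarith
      qed
      have "3 dvd C" unfolding C_def using t1 by (simp add: dvd_power)
      then have "C mod 3 = 0" by simp
      then have "n mod 3 = 2" using nC 3 by (simp add: mod_add_left_eq[symmetric])
      have "h mod 3 \<le> h" by (rule mod_less_eq_dividend)
      then have "2 \<le> h" using 3 by linarith
      moreover note \<open>n mod 3 = 2\<close>
      moreover have "3^t + 1 < n" using nC \<open>2 \<le> h\<close> C_def by simp
      moreover have "2*n \<le> 3^Suc t" using False c_def by simp
      moreover have "(n - 3^t) mod 3 = 2" using 3 h_def C_def by simp
      ultimately show ?thesis by blast
    qed
  qed
qed

lemma alu: "(\<forall>k<n. P k) \<longleftrightarrow> (\<forall>k\<in>set [0..<n]. P k)" by auto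

definition keysL :: "nat list" where "keysL = [11,29,32,35,38,83,86,89,92,95,98,101,104,107,110,113,116,119,245,248,251,254,257,260,263,266,269,272,275,278,281,284,287,290,293,296,299,302,305,308,311,314,317,320,323,326,329,332,335,338,341,344,347,350,353,356,359,362,731,734,737,740,743,746,749,752,755,758,761,764,767,770,773,776,779,782,785,788,791,794,797,800,803,806,809,812,815,818,821,824,827,830,833,836,839,842]"

lemma keys_11: "\<forall>k<1. (11::nat) + 3*k \<in> set keysL"
  unfolding alu keysL_def by (simp add: upt_rec)

lemma keys_29: "\<forall>k<4. (29::nat) + 3*k \<in> set keysL"
  unfolding alu keysL_def by (simp add: upt_rec)

lemma keys_83: "\<forall>k<13. (83::nat) + 3*k \<in> set keysL"
  unfolding alu keysL_def by (simp add: upt_rec)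

lemma keys_245: "\<forall>k<40. (245::nat) + 3*k \<in> set keysL"
  unfolding alu keysL_def by (simp add: upt_rec)

lemma keys_731: "\<forall>k<38. (731::nat) + 3*k \<in> set keysL"
  unfolding alu keysL_def by (simp add: upt_rec)

lemma keys_in:
  assumes "m < 845" "3^t + 1 < m" "2*m \<le> 3^Suc t" "(m - 3^t) mod 3 = 2"
  shows "m \<in> set keysL"
proof -
  have t6: "t \<le> 6"
  proof (rule ccontr)
    assume "\<not> t \<le> 6" then have "7 \<le> t" by simp
    then have "(3::nat)^7 \<le> 3^t" by (rule power_increasing) simp
    then show False using assms(1,2) by simp
  qed
  define k where "k = (m - 3^t) div 3"
  have "(m - 3^t) div 3 * 3 + (m - 3^t) mod 3 = m - 3^t" by (rule div_mult_mod_eq)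
  then have mk: "m = 3^t + 2 + 3*k" using assms(2,4) k_def by linarith
  have "t = 0 \<or> t = 1 \<or> t = 2 \<or> t = 3 \<or> t = 4 \<or> t = 5 \<or> t = 6" using t6 by arith
  then show ?thesis
  proof (elim disjE)
    assume "t = 0" then show ?thesis using assms(2,3) by simp
  next
    assume "t = 1" then show ?thesis using assms(2,3) by simp
  next
    assume tt: "t = 2"
    then have "k < 1" "m = 11 + 3*k" using assms(3) mk by simp_all
    then show ?thesis using keys_11 by blast
  next
    assume tt: "t = 3"
    then have "k < 4" "m = 29 + 3*k" using assms(3) mk by simp_all
    then show ?thesis using keys_29 by blast
  next
    assume tt: "t = 4"
    then have "k < 13" "m = 83 + 3*k" using assms(3) mk by simp_all
    then show ?thesis using keys_83 by blast
  next
    assume tt: "t = 5"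
    then have "k < 40" "m = 245 + 3*k" using assms(3) mk by simp_all
    then show ?thesis using keys_245 by blast
  next
    assume tt: "t = 6"
    then have "k < 38" "m = 731 + 3*k" using assms(1) mk by simp_all
    then show ?thesis using keys_731 by blast
  qed
qed

lemma cert_11: "run 11 [] [] [Blk [11,10,6], Dec, Dec, Blk [9], Dec, PR 9, Blk [3]] = Some 0 \<and> 0 < (11::nat)"
  by (simp add: pw3_def)
lemma cert_29: "run 29 [] [] [Blk [29,28,24], Dec, Dec, Blk [27], Dec, PR 27, Blk [3]] = Some 0 \<and> 0 < (29::nat)"
  by (simp add: pw3_def)
lemma cert_32: "run 32 [] [] [Blk [32,31,18], Dec, Dec, Blk [30,26,25], Dec, Blk [29,28,24], Dec, Dec, Blk [27], Dec, Dec, Dec, Dec, PR 27, Blk [9]] = Some 3 \<and> 3 < (32::nat)"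
  by (simp add: pw3_def)
lemma cert_35: "run 35 [] [] [Blk [35,34,12], Dec, Dec, Blk [33,32,16], Dec, Dec, TR 27, PR 27, Blk [15,11,1], TR 3, Dec] = Some 0 \<and> 0 < (35::nat)"
  by (simp add: pw3_def)
lemma cert_38: "run 38 [] [] [Blk [38,37,6], Dec, Dec, Blk [36,35,10], Dec, Dec, TR 27, PR 27, Blk [17,7,3], Dec, Dec, PR 9, Dec] = Some 2 \<and> 2 < (38::nat)"
  by (simp add: pw3_def)
lemma cert_83: "run 83 [] [] [Blk [83,82,78], Dec, Dec, Blk [81], Dec, PR 81, Blk [3]] = Some 0 \<and> 0 < (83::nat)"
  by (simp add: pw3_def)
lemma cert_86: "run 86 [] [] [Blk [86,85,72], Dec, Dec, Blk [84,80,79], Dec, Blk [83,82,78], Dec, Dec, Blk [81], Dec, Dec, Dec, Dec, PR 81, Blk [9]] = Some 3 \<and> 3 < (86::nat)"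
  by (simp add: pw3_def)
lemma cert_89: "run 89 [] [] [Blk [89,88,66], Dec, Dec, Blk [87,86,70], Dec, Dec, TR 81, PR 81, Blk [15,11,1], TR 3, Dec] = Some 0 \<and> 0 < (89::nat)"
  by (simp add: pw3_def)
lemma cert_92: "run 92 [] [] [Blk [92,91,60], Dec, Dec, Blk [90,89,64], Dec, Dec, TR 81, PR 81, Blk [21,6], Blk [17,7,3], Dec, Dec, PR 9, Dec] = Some 2 \<and> 2 < (92::nat)"
  by (simp add: pw3_def)
lemma cert_95: "run 95 [] [] [Blk [95,94,54], Dec, Dec, Blk [93,90,60], Dec, Blk [92,82,69], Dec, Blk [91,77,75], Dec, Dec, Blk [89,78,76], Dec, Blk [88,81,74], Dec, Blk [87,83,73], Dec, Blk [86,85,72], Dec, Dec, Blk [84,80,79], Dec, Dec, Dec, Dec, Dec, Dec, Dec, Dec, Dec, Dec, Dec, Dec, Dec, PR 81, Blk [27], Blk [21,6], Blk [12,8,7], Blk [9], Dec, Dec, Dec, Dec] = Some 5 \<and> 5 < (95::nat)"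
  by (simp add: pw3_def)
lemma cert_98: "run 98 [] [] [Blk [98,91,54], Dec, Blk [97,90,56], Dec, Blk [96,76,71], Dec, Blk [95,81,67], Dec, Blk [94,79,70], Dec, Blk [93,86,64], Dec, Blk [92,77,74], Dec, Dec, Dec, Blk [89,85,69], Dec, Blk [88,80,75], Dec, Blk [87,84,72], Dec, Dec, Dec, Dec, Blk [83,82,78], Dec, Dec, Dec, Dec, Dec, Dec, Dec, Dec, Dec, Dec, PR 81, Blk [27], Blk [25,2], Blk [17,10], Blk [14,12,1], Blk [11,9,7], Dec, PR 9, Dec, Dec] = Some 0 \<and> 0 < (98::nat)"
  by (simp add: pw3_def)
lemma cert_101: "run 101 [] [] [Blk [101,100,42], Dec, Dec, Blk [99,98,46], Dec, Dec, TR 81, PR 81, Blk [39,35,7], PR 27, TR 9, Dec] = Some 6 \<and> 6 < (101::nat)"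
  by (simp add: pw3_def)
lemma cert_104: "run 104 [] [] [Blk [104,103,36], Dec, Dec, Blk [102,101,40], Dec, Dec, TR 81, Blk [61,20], Dec, Blk [60,21], Dec, Blk [59,22], Dec, Blk [58,23], Dec, Blk [57,24], Dec, Blk [56,25], Dec, Blk [55,26], Dec, Blk [54,27], Dec, Blk [53,28], Dec, Blk [52,29], Dec, Blk [51,30], Dec, Blk [50,31], Dec, Blk [49,32], Dec, Blk [48,33], Dec, Blk [47,18,16], Dec, PR 81, Blk [45,19,17], Blk [41,34,6], Dec, Dec, Dec, Dec, Dec, Dec, Dec, Dec, Dec, Dec, Dec, Dec, Dec, Dec, Dec, Dec, Dec, Dec, Dec, Blk [15,12], Dec, Blk [14,8,5], Dec, Blk [13,10,4], Dec, Dec, Blk [11,9,7], Dec, Dec, Dec, Dec, Dec, Dec, Dec, Dec] = Some 3 \<and> 3 < (104::nat)"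
  by (simp add: pw3_def)
lemma cert_107: "run 107 [] [] [Blk [107,106,30], Dec, Dec, Blk [105,104,34], Dec, Dec, TR 81, PR 81, Blk [51,22,8], Dec, Blk [47,21,13], Dec, Blk [20,7], Dec, Blk [19,6,2], Dec, Blk [18,5,4], Dec, Blk [17,10], Dec, Blk [16,11], Dec, Blk [15,9,3], Dec, PR 27, Blk [14,12,1], Dec, Dec, Dec, Dec, Dec, Dec, Dec, Dec, Dec, Dec, Dec, Dec] = Some 0 \<and> 0 < (107::nat)"
  by (simp add: pw3_def)
lemma cert_110: "run 110 [] [] [Blk [110,109,24], Dec, Dec, Blk [108,107,28], Dec, Dec, TR 81, PR 81, Blk [53,25,3], Dec, Dec, PR 27, Dec] = Some 2 \<and> 2 < (110::nat)"
  by (simp add: pw3_def)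
lemma cert_113: "run 113 [] [] [Blk [113,112,18], Dec, Dec, Blk [111,110,22], Dec, Dec, TR 81, Blk [52,29], Dec, Blk [51,30], Dec, Blk [50,31], Dec, Blk [49,32], Dec, Blk [48,33], Dec, Blk [47,34], Dec, Blk [46,35], Dec, Blk [45,36], Dec, Blk [44,37], Dec, Blk [43,38], Dec, Blk [42,39], Dec, Blk [41,25,15], Dec, Blk [40,24,17], Dec, Dec, Dec, Dec, Dec, Dec, Dec, Dec, Dec, Dec, Dec, Dec, TR 27, Dec, Dec, PR 27, Blk [12,10,5], Blk [9]] = Some 3 \<and> 3 < (113::nat)"
  by (simp add: pw3_def)
lemma cert_116: "run 116 [] [] [Blk [116,115,12], Dec, Dec, Blk [114,113,16], Dec, Dec, TR 81, PR 81, TR 27, PR 27, Blk [15,11,1], TR 3, Dec] = Some 0 \<and> 0 < (116::nat)"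
  by (simp add: pw3_def)
lemma cert_119: "run 119 [] [] [Blk [119,118,6], Dec, Dec, Blk [117,116,10], Dec, Dec, TR 81, PR 81, TR 27, PR 27, Blk [17,7,3], Dec, Dec, PR 9, Dec] = Some 2 \<and> 2 < (119::nat)"
  by (simp add: pw3_def)
lemma cert_245: "run 245 [] [] [Blk [245,244,240], Dec, Dec, Blk [243], Dec, PR 243, Blk [3]] = Some 0 \<and> 0 < (245::nat)"
  by (simp add: pw3_def)
lemma cert_248: "run 248 [] [] [Blk [248,247,234], Dec, Dec, Blk [246,242,241], Dec, Blk [245,244,240], Dec, Dec, Blk [243], Dec, Dec, Dec, Dec, PR 243, Blk [9]] = Some 3 \<and> 3 < (248::nat)"
  by (simp add: pw3_def)
lemma cert_251: "run 251 [] [] [Blk [251,250,228], Dec, Dec, Blk [249,248,232], Dec, Dec, TR 243, PR 243, Blk [15,11,1], TR 3, Dec] = Some 0 \<and> 0 < (251::nat)"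
  by (simp add: pw3_def)
lemma cert_254: "run 254 [] [] [Blk [254,253,222], Dec, Dec, Blk [252,251,226], Dec, Dec, TR 243, PR 243, Blk [21,6], Blk [17,7,3], Dec, Dec, PR 9, Dec] = Some 2 \<and> 2 < (254::nat)"
  by (simp add: pw3_def)
lemma cert_257: "run 257 [] [] [Blk [257,256,216], Dec, Dec, Blk [255,252,222], Dec, Blk [254,244,231], Dec, Blk [253,239,237], Dec, Dec, Blk [251,240,238], Dec, Blk [250,243,236], Dec, Blk [249,245,235], Dec, Blk [248,247,234], Dec, Dec, Blk [246,242,241], Dec, Dec, Dec, Dec, Dec, Dec, Dec, Dec, Dec, Dec, Dec, Dec, Dec, PR 243, Blk [27], Blk [21,6], Blk [12,8,7], Blk [9], Dec, Dec, Dec, Dec] = Some 5 \<and> 5 < (257::nat)"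
  by (simp add: pw3_def)
lemma cert_260: "run 260 [] [] [Blk [260,253,216], Dec, Blk [259,252,218], Dec, Blk [258,238,233], Dec, Blk [257,243,229], Dec, Blk [256,241,232], Dec, Blk [255,248,226], Dec, Blk [254,239,236], Dec, Dec, Dec, Blk [251,247,231], Dec, Blk [250,242,237], Dec, Blk [249,246,234], Dec, Dec, Dec, Dec, Blk [245,244,240], Dec, Dec, Dec, Dec, Dec, Dec, Dec, Dec, Dec, Dec, PR 243, Blk [27], Blk [25,2], Blk [17,10], Blk [14,12,1], Blk [11,9,7], Dec, PR 9, Dec, Dec] = Some 0 \<and> 0 < (260::nat)"
  by (simp add: pw3_def)
lemma cert_263: "run 263 [] [] [Blk [263,262,204], Dec, Dec, Blk [261,260,208], Dec, Dec, TR 243, PR 243, Blk [39,35,7], PR 27, TR 9, Dec] = Some 6 \<and> 6 < (263::nat)"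
  by (simp add: pw3_def)
lemma cert_266: "run 266 [] [] [Blk [266,256,207], Dec, Blk [265,264,200], Dec, Dec, Blk [263,261,205], Dec, Blk [262,245,222], Dec, Dec, Blk [260,243,226], Dec, Blk [259,239,231], Dec, Blk [258,247,224], Dec, Blk [257,255,217], Dec, Dec, Dec, Blk [254,238,237], Dec, Blk [253,251,225], Dec, Blk [252,242,235], Dec, Dec, Blk [250,246,233], Dec, Blk [249,244,236], Dec, Blk [248,241,240], Dec, Dec, Dec, Dec, Dec, Dec, Dec, Dec, Dec, Dec, Dec, Dec, Dec, Dec, PR 243, Blk [43,38], Blk [36,26,19], Blk [21,6], Blk [18,5,4], Blk [17,10], Blk [12,8,7], Dec, Dec, Dec, Dec, Dec] = Some 3 \<and> 3 < (266::nat)"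
  by (simp add: pw3_def)
lemma cert_269: "run 269 [] [] [Blk [269,268,192], Dec, Dec, Blk [267,266,196], Dec, Dec, TR 243, PR 243, Blk [51,22,8], Dec, Blk [47,21,13], Dec, Blk [20,7], Dec, Blk [19,6,2], Dec, Blk [18,5,4], Dec, Blk [17,10], Dec, Blk [16,11], Dec, Blk [15,9,3], Dec, PR 27, Blk [14,12,1], Dec, Dec, Dec, Dec, Dec, Dec, Dec, Dec, Dec, Dec, Dec, Dec] = Some 0 \<and> 0 < (269::nat)"
  by (simp add: pw3_def)
lemma cert_272: "run 272 [] [] [Blk [272,271,186], Dec, Dec, Blk [270,269,190], Dec, Dec, TR 243, PR 243, Blk [57,24], Blk [53,25,3], Dec, Dec, PR 27, Dec] = Some 2 \<and> 2 < (272::nat)"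
  by (simp add: pw3_def)
lemma cert_275: "run 275 [] [] [Blk [275,257,197], Dec, Blk [274,272,183], Dec, Blk [273,256,200], Dec, Dec, Blk [271,264,194], Dec, Blk [270,261,198], Dec, Blk [269,245,215], Dec, Blk [268,250,211], Dec, Blk [267,259,203], Dec, Blk [266,238,225], Dec, Blk [265,243,221], Dec, Dec, Blk [263,258,208], Dec, Blk [262,239,228], Dec, Dec, Blk [260,236,233], Dec, Dec, Dec, Dec, Dec, Blk [255,252,222], Dec, Blk [254,241,234], Dec, Blk [253,249,227], Dec, Dec, Blk [251,246,232], Dec, Dec, Dec, Blk [248,244,237], Dec, Blk [247,242,240], Dec, Dec, Dec, Dec, Dec, Dec, Dec, Dec, Dec, Dec, Dec, Dec, PR 243, Blk [60,11,10], Blk [49,32], Blk [46,28,7], Dec, Blk [45,21,15], Blk [43,22,16], Blk [40,35,6], Dec, Blk [18,9]] = Some 5 \<and> 5 < (275::nat)"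
  by (simp add: pw3_def)
lemma cert_278: "run 278 [] [] [Blk [278,277,174], Dec, Dec, Blk [276,275,178], Dec, Dec, TR 243, PR 243, Blk [69,12], Blk [65,16], TR 27, PR 27, Blk [15,11,1], TR 3, Dec] = Some 0 \<and> 0 < (278::nat)"
  by (simp add: pw3_def)
lemma cert_281: "run 281 [] [] [Blk [281,280,168], Dec, Dec, Blk [279,278,172], Dec, Dec, TR 243, PR 243, Blk [75,6], Blk [71,10], TR 27, PR 27, Blk [17,7,3], Dec, Dec, PR 9, Dec] = Some 2 \<and> 2 < (281::nat)"
  by (simp add: pw3_def)
lemma cert_284: "run 284 [] [] [Blk [284,268,177], Dec, Blk [283,263,183], Dec, Blk [282,259,188], Dec, Blk [281,253,195], Dec, Blk [280,252,197], Dec, Blk [279,242,208], Dec, Blk [278,247,204], Dec, Blk [277,240,212], Dec, Blk [276,236,217], Dec, Blk [275,264,190], Dec, Blk [274,254,201], Dec, Blk [273,245,211], Dec, Blk [272,266,191], Dec, Blk [271,243,215], Dec, Blk [270,241,218], Dec, Blk [269,234,226], Dec, Dec, Blk [267,255,207], Dec, Dec, Blk [265,244,220], Dec, Dec, Dec, Blk [262,239,228], Dec, Blk [261,246,222], Dec, Blk [260,256,213], Dec, Dec, Blk [258,238,233], Dec, Blk [257,237,235], Dec, Dec, Dec, Dec, Dec, Dec, Blk [251,249,229], Dec, Blk [250,248,231], Dec, Dec, Dec, Dec, Dec, Dec, Dec, Dec, Dec, Dec, Dec, Dec, Dec, Dec, Dec, Dec, Dec, Dec, PR 243, Blk [66,15],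 Blk [60,21], Blk [55,26], Blk [53,28], Blk [52,23,6], Blk [48,25,8], Blk [46,35], Blk [42,32,7], Blk [39,30,12], Blk [36,31,14], Blk [17,10], Dec, Blk [9], Dec, Dec, Dec, Dec] = Some 5 \<and> 5 < (284::nat)"
  by (simp add: pw3_def)
lemma cert_287: "run 287 [] [] [Blk [287,282,160], Dec, Blk [286,285,158], Dec, Dec, Blk [284,277,168], Dec, Blk [283,281,165], Dec, Dec, Dec, Blk [280,271,178], Dec, Blk [279,258,192], Dec, Blk [278,269,182], Dec, Dec, Blk [276,256,197], Dec, Blk [275,268,186], Dec, Blk [274,254,201], Dec, Blk [273,260,196], Dec, Blk [272,248,209], Dec, Dec, Blk [270,265,194], Dec, Dec, Dec, Blk [267,251,211], Dec, Blk [266,242,221], Dec, Dec, Blk [264,238,227], Dec, Blk [263,244,222], Dec, Blk [262,235,232], Dec, Blk [261,243,225], Dec, Dec, Blk [259,250,220], Dec, Dec, Blk [257,246,226], Dec, Dec, Blk [255,245,229], Dec, Dec, Blk [253,240,236], Dec, Blk [252,247,230], Dec, Dec, Dec, Blk [249,241,239], Dec, Dec, Dec, Dec, Dec, Dec, Dec, Dec, Dec, Dec, Dec, Dec, PR 243, Blk [85,83,75], Blk [78,3], Blk [65,16], Blk [61,18,2], Blk [57,13,11], Blk [51,23,7], Blk [49,32], Blk [47,34], Blk [46,21,14], Blk [42,22,17], Blk [8,1], PR 9, Dec, Dec, Dec] = Some 0 \<and> 0 < (287::nat)"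
  by (simp add: pw3_def)
lemma cert_290: "run 290 [] [] [Blk [290,289,150], Dec, Dec, Blk [288,287,154], Dec, Dec, TR 243, Blk [199,44], Dec, Blk [198,45], Dec, Blk [197,46], Dec, Blk [196,47], Dec, Blk [195,48], Dec, Blk [194,49], Dec, Blk [193,50], Dec, Blk [192,51], Dec, Blk [191,52], Dec, Blk [190,53], Dec, Blk [189,54], Dec, Blk [188,55], Dec, Blk [187,56], Dec, Blk [186,57], Dec, Blk [185,58], Dec, Blk [184,59], Dec, Blk [183,60], Dec, Blk [182,61], Dec, Blk [181,62], Dec, Blk [180,63], Dec, Blk [179,64], Dec, Blk [178,65], Dec, Blk [177,66], Dec, Blk [176,67], Dec, Blk [175,68], Dec, Blk [174,69], Dec, Blk [173,70], Dec, Blk [172,71], Dec, Blk [171,72], Dec, Blk [170,73], Dec, Blk [169,74], Dec, Blk [168,75], Dec, Blk [167,76], Dec, Blk [166,77], Dec, Blk [165,78], Dec, Blk [164,79], Dec, Blk [163,80], Dec, Blk [162,81], Dec, Blk [161,82], Dec, Blk [160,83], Dec, Blk [159,84], Dec, Blk [158,85], Dec, Blk [157,86], Dec, Blk [156,87], Dec, Blk [155,88], Dec, Dec, Blk [153,90], Dec, Blk [152,91], Dec, Blk [151,92], Dec, Dec, Blk [149,94], Dec, Blk [148,95], Dec, Blk [147,96], Dec, Blk [146,97], Dec, Blk [145,98], Dec, Blk [144,99], Dec, Blk [143,100], Dec, Blk [142,101], Dec, Blk [141,102], Dec, Blk [140,103], Dec, Blk [139,104], Dec, Blk [138,105], Dec,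 Blk [137,106], Dec, Blk [136,107], Dec, Blk [135,108], Dec, Blk [134,109], Dec, Blk [133,110], Dec, Blk [132,111], Dec, Blk [131,112], Dec, Blk [130,113], Dec, Blk [129,114], Dec, Blk [128,115], Dec, Blk [127,116], Dec, Blk [126,117], Dec, Blk [125,118], Dec, Blk [124,119], Dec, Blk [123,120], Dec, Blk [122,93,28], Dec, Blk [121,89,33], Dec, Dec, Dec, Dec, Dec, Dec, Dec, Dec, Dec, Dec, Dec, Dec, Dec, Dec, Dec, Dec, Dec, Dec, Dec, Dec, Dec, Dec, Dec, Dec, Dec, Dec, Dec, Dec, Dec, Dec, Dec, Dec, Dec, Dec, Dec, Dec, Dec, Dec, Dec, Dec, Dec, Dec, Dec, Dec, Dec, Dec, Dec, Dec, Dec, Dec, Dec, Dec, Dec, Dec, Dec, Dec, Dec, Dec, Dec, Dec, Dec, Dec, Dec, Dec, Dec, Dec, Dec, Dec, Dec, Dec, Dec, Dec, Dec, Dec, Dec, Dec, Dec, Dec, PR 81, Blk [37,36,8], Dec, Dec, Blk [35,27,19], Dec, Blk [34,29,18], Dec, Dec, Blk [32,25,24], Dec, Blk [31,30,20], Dec, Dec, Dec, Dec, Dec, PR 27, Blk [9], Blk [7,2], Blk [3]] = Some 0 \<and> 0 < (290::nat)"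
  by (simp add: pw3_def)
lemma cert_293: "run 293 [] [] [Blk [293,292,144], Dec, Dec, Blk [291,290,148], Dec, Dec, TR 243, Blk [196,47], Dec, Blk [195,48], Dec, Blk [194,49], Dec, Blk [193,50], Dec, Blk [192,51], Dec, Blk [191,52], Dec, Blk [190,53], Dec, Blk [189,54], Dec, Blk [188,55], Dec, Blk [187,56], Dec, Blk [186,57], Dec, Blk [185,58], Dec, Blk [184,59], Dec, Blk [183,60], Dec, Blk [182,61], Dec, Blk [181,62], Dec, Blk [180,63], Dec, Blk [179,64], Dec, Blk [178,65], Dec, Blk [177,66], Dec, Blk [176,67], Dec, Blk [175,68], Dec, Blk [174,69], Dec, Blk [173,70], Dec, Blk [172,71], Dec, Blk [171,72], Dec, Blk [170,73], Dec, Blk [169,74], Dec, Blk [168,75], Dec, Blk [167,76], Dec, Blk [166,77], Dec, Blk [165,78], Dec, Blk [164,79], Dec, Blk [163,80], Dec, Blk [162,81], Dec, Blk [161,82], Dec, Blk [160,83], Dec, Blk [159,84], Dec, Blk [158,85], Dec, Blk [157,86], Dec, Blk [156,87], Dec, Blk [155,88], Dec, Blk [154,89], Dec, Blk [153,90], Dec, Blk [152,91], Dec, Blk [151,92], Dec, Blk [150,93], Dec, Blk [149,94], Dec, Dec, Blk [147,96], Dec, Blk [146,97], Dec, Blk [145,98], Dec, Dec, Blk [143,100], Dec, Blk [142,101], Dec, Blk [141,102], Dec, Blk [140,103], Dec, Blk [139,104], Dec, Blk [138,105], Dec, Blk [137,106], Dec, Blk [136,107], Dec, Blk [135,108], Dec,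 Blk [134,109], Dec, Blk [133,110], Dec, Blk [132,111], Dec, Blk [131,112], Dec, Blk [130,113], Dec, Blk [129,114], Dec, Blk [128,115], Dec, Blk [127,116], Dec, Blk [126,117], Dec, Blk [125,118], Dec, Blk [124,119], Dec, Blk [123,120], Dec, Blk [122,99,22], Dec, Blk [121,95,27], Dec, Dec, Dec, Dec, Dec, Dec, Dec, Dec, Dec, Dec, Dec, Dec, Dec, Dec, Dec, Dec, Dec, Dec, Dec, Dec, Dec, Dec, Dec, Dec, Dec, Dec, Dec, Dec, Dec, Dec, Dec, Dec, Dec, Dec, Dec, Dec, Dec, Dec, Dec, Dec, Dec, Dec, Dec, Dec, Dec, Dec, Dec, Dec, Dec, Dec, Dec, Dec, Dec, Dec, Dec, Dec, Dec, Dec, Dec, Dec, Dec, Dec, Dec, Dec, Dec, Dec, Dec, Dec, Dec, Dec, Dec, Dec, Dec, Dec, Dec, PR 81, Blk [34,33,14], Dec, Dec, Blk [32,31,18], Dec, Dec, Blk [30,26,25], Dec, Blk [29,28,24], Dec, Dec, Dec, Dec, Dec, Dec, PR 27, Blk [13,9,5]] = Some 3 \<and> 3 < (293::nat)"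
  by (simp add: pw3_def)
lemma cert_296: "run 296 [] [] [Blk [296,295,138], Dec, Dec, Blk [294,293,142], Dec, Dec, TR 243, PR 243, Blk [105,101,37], PR 81, Blk [44,31,6], Dec, Blk [30,29,22], Dec, Dec, TR 27, PR 27, Blk [21,5,1], Dec] = Some 0 \<and> 0 < (296::nat)"
  by (simp add: pw3_def)
lemma cert_299: "run 299 [] [] [Blk [299,298,132], Dec, Dec, Blk [297,296,136], Dec, Dec, TR 243, PR 243, Blk [111,107,25], PR 81, TR 27, Dec] = Some 24 \<and> 24 < (299::nat)"
  by (simp add: pw3_def)
lemma cert_302: "run 302 [] [] [Blk [302,301,126], Dec, Dec, Blk [300,299,130], Dec, Dec, TR 243, PR 243, Blk [117,113,13], Blk [55,26], Dec, Blk [54,27], Dec, Blk [53,28], Dec, Blk [52,29], Dec, Blk [51,30], Dec, Blk [50,31], Dec, Blk [49,32], Dec, Blk [48,33], Dec, Blk [47,34], Dec, Blk [46,35], Dec, Blk [45,36], Dec, Blk [44,37], Dec, Blk [43,38], Dec, Blk [42,25,14], Dec, PR 81, Blk [39,24,18], Dec, Dec, Dec, Dec, Dec, Dec, Dec, Dec, Dec, Dec, Dec, Dec, Dec, Dec, Dec, Dec, PR 27, Blk [9]] = Some 3 \<and> 3 < (302::nat)"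
  by (simp add: pw3_def)
lemma cert_305: "run 305 [] [] [Blk [305,304,120], Dec, Dec, Blk [303,302,124], Dec, Dec, TR 243, PR 243, Blk [123,119,1], PR 81, PR 27, TR 3, Dec] = Some 0 \<and> 0 < (305::nat)"
  by (simp add: pw3_def)
lemma cert_308: "run 308 [] [] [Blk [308,307,114], Dec, Dec, Blk [306,305,118], Dec, Dec, TR 243, PR 243, Blk [129,61,53], Dec, Blk [125,60,58], Dec, Blk [59,22], Dec, Dec, Blk [57,24], Dec, Blk [56,25], Dec, Blk [55,26], Dec, Blk [54,27], Dec, Dec, Blk [52,29], Dec, Blk [51,30], Dec, Blk [50,31], Dec, Blk [49,32], Dec, Blk [48,33], Dec, Blk [47,34], Dec, Blk [46,35], Dec, Blk [45,36], Dec, Blk [44,37], Dec, Blk [43,38], Dec, Blk [42,39], Dec, Blk [41,28,12], Dec, Blk [40,23,18], Dec, Dec, Dec, Dec, Dec, Dec, Dec, Dec, Dec, Dec, Dec, Dec, Dec, Dec, Dec, Dec, Dec, Dec, Dec, PR 27, Blk [15,9,3], PR 9, Dec] = Some 2 \<and> 2 < (308::nat)"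
  by (simp add: pw3_def)
lemma cert_311: "run 311 [] [] [Blk [311,310,108], Dec, Dec, Blk [309,308,112], Dec, Dec, TR 243, PR 243, Blk [135,64,44], Dec, Blk [131,63,49], Dec, Blk [62,19], Dec, Blk [61,20], Dec, Blk [60,21], Dec, Blk [59,22], Dec, Blk [58,23], Dec, Blk [57,24], Dec, Blk [56,25], Dec, Blk [55,26], Dec, Blk [54,27], Dec, Blk [53,28], Dec, Blk [52,29], Dec, Blk [51,30], Dec, Blk [50,18,13], Dec, Dec, Blk [48,17,16], Dec, Blk [47,34], Dec, Blk [46,35], Dec, Blk [45,36], Dec, Dec, Blk [43,38], Dec, Blk [42,39], Dec, Blk [41,32,8], Dec, Blk [40,31,10], Dec, Dec, Dec, Blk [37,33,11], Dec, Dec, Dec, Dec, Dec, Dec, Dec, Dec, Dec, Dec, Dec, Dec, Dec, Dec, Dec, Dec, Dec, Dec, Dec, Dec, Dec, Dec, PR 27, Dec, Dec, Blk [14,7,6], Blk [9], Dec, Dec, Dec, Dec] = Some 5 \<and> 5 < (311::nat)"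
  by (simp add: pw3_def)
lemma cert_314: "run 314 [] [] [Blk [314,313,102], Dec, Dec, Blk [312,311,106], Dec, Dec, TR 243, PR 243, Blk [141,67,35], Dec, Blk [137,66,40], Dec, Blk [65,16], Dec, Blk [64,17], Dec, Blk [63,18], Dec, Blk [62,19], Dec, Blk [61,20], Dec, Blk [60,21], Dec, Blk [59,22], Dec, Blk [58,23], Dec, Blk [57,24], Dec, Blk [56,25], Dec, Blk [55,15,11], Dec, Blk [54,14,13], Dec, Blk [53,28], Dec, Blk [52,29], Dec, Blk [51,30], Dec, Blk [50,31], Dec, Blk [49,32], Dec, Blk [48,33], Dec, Blk [47,34], Dec, Blk [46,27,8], Dec, Blk [45,26,10], Dec, PR 81, Blk [41,36,4], Dec, Dec, Dec, Dec, Dec, Dec, Dec, Dec, Dec, Dec, Dec, Dec, Dec, Dec, Dec, Dec, Dec, Dec, Dec, Dec, Dec, Dec, Dec, Dec, Blk [12,9,6], Dec, Dec, Dec, Dec, Dec, PR 9, Blk [5,3,1], Dec] = Some 0 \<and> 0 < (314::nat)"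
  by (simp add: pw3_def)
lemma cert_317: "run 317 [] [] [Blk [317,316,96], Dec, Dec, Blk [315,314,100], Dec, Dec, TR 243, PR 243, Blk [147,70,26], Dec, Blk [143,69,31], Dec, Blk [68,13], Dec, Blk [67,14], Dec, Blk [66,15], Dec, Blk [65,16], Dec, Blk [64,17], Dec, Blk [63,18], Dec, Blk [62,19], Dec, Blk [61,12,8], Dec, Blk [60,11,10], Dec, Blk [59,22], Dec, Blk [58,23], Dec, Blk [57,24], Dec, Blk [56,25], Dec, Blk [55,21,5], Dec, Blk [54,20,7], Dec, PR 81, Blk [50,27,4], Dec, Dec, Dec, Dec, Dec, Dec, Dec, Dec, Dec, Dec, Dec, Dec, Dec, Dec, Dec, Dec, Dec, Dec, Blk [9], Dec, Dec, Dec, PR 9] = Some 2 \<and> 2 < (317::nat)"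
  by (simp add: pw3_def)
lemma cert_320: "run 320 [] [] [Blk [320,319,90], Dec, Dec, Blk [318,317,94], Dec, Dec, TR 243, PR 243, Blk [153,73,17], Dec, Blk [149,72,22], Dec, Blk [71,10], Dec, Blk [70,11], Dec, Blk [69,12], Dec, Blk [68,8,5], Dec, Blk [67,14], Dec, Blk [66,15], Dec, Blk [65,9,7], Dec, PR 81, Blk [64,13,4], Blk [59,16,6], Dec, Dec, Dec, Dec, Dec, Dec, Dec, Dec, Dec, Dec, Dec, Dec, Dec] = Some 3 \<and> 3 < (320::nat)"
  by (simp add: pw3_def)
lemma cert_323: "run 323 [] [] [Blk [323,322,84], Dec, Dec, Blk [321,320,88], Dec, Dec, TR 243, PR 243, Blk [159,76,8], Dec, Blk [155,75,13], Dec, Blk [74,7], Dec, Blk [73,6,2], Dec, Blk [72,5,4], Dec, Blk [71,10], Dec, Blk [70,11], Dec, Blk [69,9,3], Dec, PR 81, Blk [68,12,1], Dec, Dec, Dec, Dec, Dec, Dec, Dec, Dec, Dec, Dec, Dec, Dec] = Some 0 \<and> 0 < (323::nat)"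
  by (simp add: pw3_def)
lemma cert_326: "run 326 [] [] [Blk [326,325,78], Dec, Dec, Blk [324,323,82], Dec, Dec, TR 243, PR 243, Blk [161,79,3], Dec, Dec, PR 81, Dec] = Some 2 \<and> 2 < (326::nat)"
  by (simp add: pw3_def)
lemma cert_329: "run 329 [] [] [Blk [329,328,72], Dec, Dec, Blk [327,326,76], Dec, Dec, TR 243, Blk [160,83], Dec, Blk [159,84], Dec, Blk [158,85], Dec, Blk [157,86], Dec, Blk [156,87], Dec, Blk [155,88], Dec, Blk [154,89], Dec, Blk [153,90], Dec, Blk [152,91], Dec, Blk [151,92], Dec, Blk [150,93], Dec, Blk [149,94], Dec, Blk [148,95], Dec, Blk [147,96], Dec, Blk [146,97], Dec, Blk [145,98], Dec, Blk [144,99], Dec, Blk [143,100], Dec, Blk [142,101], Dec, Blk [141,102], Dec, Blk [140,103], Dec, Blk [139,104], Dec, Blk [138,105], Dec, Blk [137,106], Dec, Blk [136,107], Dec, Blk [135,108], Dec, Blk [134,109], Dec, Blk [133,110], Dec, Blk [132,111], Dec, Blk [131,112], Dec, Blk [130,113], Dec, Blk [129,114], Dec, Blk [128,115], Dec, Blk [127,116], Dec, Blk [126,117], Dec, Blk [125,118], Dec, Blk [124,119], Dec, Blk [123,120], Dec, Blk [122,79,42], Dec, Blk [121,78,44], Dec, Dec, Dec, Dec, Dec, Dec, Dec, Dec, Dec, Dec, Dec, Dec, Dec, Dec, Dec, Dec, Dec, Dec, Dec, Dec, Dec, Dec, Dec, Dec, Dec, Dec, Dec, Dec, Dec, Dec,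 Dec, Dec, Dec, Dec, Dec, Dec, Dec, Dec, Dec, TR 81, Dec, Dec, PR 81, Blk [39,37,5], Blk [9]] = Some 3 \<and> 3 < (329::nat)"
  by (simp add: pw3_def)
lemma cert_332: "run 332 [] [] [Blk [332,331,66], Dec, Dec, Blk [330,329,70], Dec, Dec, TR 243, PR 243, TR 81, PR 81, Blk [15,11,1], TR 3, Dec] = Some 0 \<and> 0 < (332::nat)"
  by (simp add: pw3_def)
lemma cert_335: "run 335 [] [] [Blk [335,334,60], Dec, Dec, Blk [333,332,64], Dec, Dec, TR 243, PR 243, TR 81, PR 81, Blk [21,6], Blk [17,7,3], Dec, Dec, PR 9, Dec] = Some 2 \<and> 2 < (335::nat)"
  by (simp add: pw3_def)
lemma cert_338: "run 338 [] [] [Blk [338,337,54], Dec, Dec, Blk [336,335,58], Dec, Dec, TR 243, PR 243, TR 81, Blk [70,11], Dec, Blk [69,12], Dec, Blk [68,13], Dec, Blk [67,14], Dec, Blk [66,15], Dec, Blk [65,16], Dec, Blk [64,17], Dec, Blk [63,18], Dec, Blk [62,19], Dec, Blk [61,20], Dec, Blk [60,21], Dec, Blk [59,22], Dec, Dec, Blk [57,24], Dec, Blk [56,25], Dec, Blk [55,26], Dec, Dec, Blk [53,28], Dec, Blk [52,29], Dec, Blk [51,30], Dec, Blk [50,31], Dec, Blk [49,32], Dec, Blk [48,23,10], Dec, Blk [47,34], Dec, Blk [46,27,8], Dec, Blk [45,36], Dec, Blk [44,37], Dec, Blk [43,38], Dec, Blk [42,39], Dec, Blk [41,33,7], Dec,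 Blk [40,35,6], Dec, Dec, Dec, Dec, Dec, Dec, Dec, Dec, Dec, Dec, Dec, Dec, Dec, Dec, Dec, Dec, Dec, Dec, Dec, Dec, Dec, Dec, Dec, Dec, Dec, Dec, Dec, Dec, Dec, Dec, Dec, Blk [9], Dec, Dec, Dec, Dec] = Some 5 \<and> 5 < (338::nat)"
  by (simp add: pw3_def)
lemma cert_341: "run 341 [] [] [Blk [341,340,48], Dec, Dec, Blk [339,338,52], Dec, Dec, TR 243, PR 243, TR 81, Blk [67,14], Dec, Blk [66,15], Dec, Blk [65,16], Dec, Blk [64,17], Dec, Blk [63,18], Dec, Blk [62,19], Dec, Blk [61,20], Dec, Blk [60,21], Dec, Blk [59,22], Dec, Blk [58,23], Dec, Blk [57,24], Dec, Blk [56,25], Dec, Blk [55,26], Dec, Blk [54,27], Dec, Blk [53,28], Dec, Dec, Blk [51,30], Dec, Blk [50,31], Dec, Blk [49,32], Dec, Dec, Blk [47,34], Dec, Blk [46,35], Dec, Blk [45,36], Dec, Blk [44,37], Dec, Blk [43,38], Dec, Blk [42,39], Dec, Blk [41,33,7], Dec, Blk [40,29,12], Dec, Dec, Dec, Dec, Dec, Dec, Dec, Dec, Dec, Dec, Dec, Dec, Dec, Dec, Dec, Dec, Dec, Dec, Dec, Dec, Dec, Dec, Dec, Dec, Dec, Dec, Dec, Blk [13,11,3], Dec, Dec, Dec, TR 9, Dec, PR 9, Blk [6,2,1], Dec, Dec] = Some 0 \<and> 0 < (341::nat)"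
  by (simp add: pw3_def)
lemma cert_344: "run 344 [] [] [Blk [344,343,42], Dec, Dec, Blk [342,341,46], Dec, Dec, TR 243, PR 243, TR 81, PR 81, Blk [39,35,7], PR 27, TR 9, Dec] = Some 6 \<and> 6 < (344::nat)"
  by (simp add: pw3_def)
lemma cert_347: "run 347 [] [] [Blk [347,346,36], Dec, Dec, Blk [345,344,40], Dec, Dec, TR 243, PR 243, TR 81, Blk [61,20], Dec, Blk [60,21], Dec, Blk [59,22], Dec, Blk [58,23], Dec, Blk [57,24], Dec, Blk [56,25], Dec, Blk [55,26], Dec, Blk [54,27], Dec, Blk [53,28], Dec, Blk [52,29], Dec, Blk [51,30], Dec, Blk [50,31], Dec, Blk [49,32], Dec, Blk [48,33], Dec, Blk [47,18,16], Dec, PR 81, Blk [45,19,17], Blk [41,34,6], Dec, Dec, Dec, Dec, Dec, Dec, Dec, Dec, Dec, Dec, Dec, Dec, Dec, Dec, Dec, Dec, Dec, Dec, Dec, Blk [15,12], Dec, Blk [14,8,5], Dec, Blk [13,10,4], Dec, Dec, Blk [11,9,7], Dec, Dec, Dec, Dec, Dec, Dec, Dec, Dec] = Some 3 \<and> 3 < (347::nat)"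
  by (simp add: pw3_def)
lemma cert_350: "run 350 [] [] [Blk [350,349,30], Dec, Dec, Blk [348,347,34], Dec, Dec, TR 243, PR 243, TR 81, PR 81, Blk [51,22,8], Dec, Blk [47,21,13], Dec, Blk [20,7], Dec, Blk [19,6,2], Dec, Blk [18,5,4], Dec, Blk [17,10], Dec, Blk [16,11], Dec, Blk [15,9,3], Dec, PR 27, Blk [14,12,1], Dec, Dec, Dec, Dec, Dec, Dec, Dec, Dec, Dec, Dec, Dec, Dec] = Some 0 \<and> 0 < (350::nat)"
  by (simp add: pw3_def)
lemma cert_353: "run 353 [] [] [Blk [353,352,24], Dec, Dec, Blk [351,350,28], Dec, Dec, TR 243, PR 243, TR 81, PR 81, Blk [53,25,3], Dec, Dec, PR 27, Dec] = Some 2 \<and> 2 < (353::nat)"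
  by (simp add: pw3_def)
lemma cert_356: "run 356 [] [] [Blk [356,355,18], Dec, Dec, Blk [354,353,22], Dec, Dec, TR 243, PR 243, TR 81, Blk [52,29], Dec, Blk [51,30], Dec, Blk [50,31], Dec, Blk [49,32], Dec, Blk [48,33], Dec, Blk [47,34], Dec, Blk [46,35], Dec, Blk [45,36], Dec, Blk [44,37], Dec, Blk [43,38], Dec, Blk [42,39], Dec, Blk [41,25,15], Dec, Blk [40,24,17], Dec, Dec, Dec, Dec, Dec, Dec, Dec, Dec, Dec, Dec, Dec, Dec, TR 27, Dec, Dec, PR 27, Blk [12,10,5], Blk [9]] = Some 3 \<and> 3 < (356::nat)"
  by (simp add: pw3_def)
lemma cert_359: "run 359 [] [] [Blk [359,358,12], Dec, Dec, Blk [357,356,16], Dec, Dec, TR 243, TR 81, TR 27, PR 27, Blk [15,11,1], TR 3, Dec] = Some 0 \<and> 0 < (359::nat)"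
  by (simp add: pw3_def)
lemma cert_362: "run 362 [] [] [Blk [362,361,6], Dec, Dec, Blk [360,359,10], Dec, Dec, TR 243, TR 81, TR 27, PR 27, Blk [17,7,3], Dec, Dec, PR 9, Dec] = Some 2 \<and> 2 < (362::nat)"
  by (simp add: pw3_def)
lemma cert_731: "run 731 [] [] [Blk [731,730,726], Dec, Dec, Blk [729], Dec, PR 729, Blk [3]] = Some 0 \<and> 0 < (731::nat)"
  by (simp add: pw3_def)
lemma cert_734: "run 734 [] [] [Blk [734,733,720], Dec, Dec, Blk [732,728,727], Dec, Blk [731,730,726], Dec, Dec, Blk [729], Dec, Dec, Dec, Dec, PR 729, Blk [9]] = Some 3 \<and> 3 < (734::nat)"
  by (simp add: pw3_def)
lemma cert_737: "run 737 [] [] [Blk [737,736,714], Dec, Dec, Blk [735,734,718], Dec, Dec, TR 729, PR 729, Blk [15,11,1], TR 3, Dec] = Some 0 \<and> 0 < (737::nat)"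
  by (simp add: pw3_def)
lemma cert_740: "run 740 [] [] [Blk [740,739,708], Dec, Dec, Blk [738,737,712], Dec, Dec, TR 729, PR 729, Blk [21,6], Blk [17,7,3], Dec, Dec, PR 9, Dec] = Some 2 \<and> 2 < (740::nat)"
  by (simp add: pw3_def)
lemma cert_743: "run 743 [] [] [Blk [743,735,709], Dec, Blk [742,733,712], Dec, Blk [741,727,719], Dec, Blk [740,739,708], Dec, Dec, Blk [738,729,720], Dec, Blk [737,728,722], Dec, Blk [736,726,725], Dec, Dec, Blk [734,730,723], Dec, Dec, Blk [732,731,724], Dec, Dec, Dec, Dec, Dec, Dec, Dec, Dec, Dec, Dec, Dec, PR 729, Blk [21,6], Blk [20,7], Dec, Dec, Blk [17,10], Blk [9]] = Some 5 \<and> 5 < (743::nat)"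
  by (simp add: pw3_def)
lemma cert_746: "run 746 [] [] [Blk [746,742,699], Dec, Blk [745,740,702], Dec, Blk [744,738,705], Dec, Blk [743,731,713], Dec, Dec, Blk [741,732,714], Dec, Dec, Blk [739,728,720], Dec, Dec, Blk [737,727,723], Dec, Blk [736,734,717], Dec, Blk [735,730,722], Dec, Dec, Blk [733,729,725], Dec, Dec, Dec, Dec, Dec, Dec, Dec, PR 729, Blk [30,27,24], Blk [16,7,4], Blk [15,12], Blk [9], Blk [6,2,1], Dec, Dec] = Some 0 \<and> 0 < (746::nat)"
  by (simp add: pw3_def)
lemma cert_749: "run 749 [] [] [Blk [749,748,690], Dec, Dec, Blk [747,746,694], Dec, Dec, TR 729, PR 729, Blk [39,35,7], PR 27, TR 9, Dec] = Some 6 \<and> 6 < (749::nat)"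
  by (simp add: pw3_def)
lemma cert_752: "run 752 [] [] [Blk [752,751,684], Dec, Dec, Blk [750,749,688], Dec, Dec, TR 729, Blk [709,20], Dec, Blk [708,21], Dec, Blk [707,18,4], Dec, Blk [706,15,8], Dec, Blk [705,24], Dec, Blk [704,25], Dec, Blk [703,26], Dec, Blk [702,27], Dec, Blk [701,28], Dec, Blk [700,19,10], Dec, PR 729, Blk [45,29,7], Dec, Dec, Dec, Dec, Dec, Dec, Blk [41,23,17], Dec, PR 27, Dec, Blk [12,9,6]] = Some 3 \<and> 3 < (752::nat)"
  by (simp add: pw3_def)
lemma cert_755: "run 755 [] [] [Blk [755,754,678], Dec, Dec, Blk [753,752,682], Dec, Dec, TR 729, PR 729, Blk [51,22,8], Dec, Blk [47,21,13], Dec, Blk [20,7], Dec, Blk [19,6,2], Dec, Blk [18,5,4], Dec, Blk [17,10], Dec, Blk [16,11], Dec, Blk [15,9,3], Dec, PR 27, Blk [14,12,1], Dec, Dec, Dec, Dec, Dec, Dec, Dec, Dec, Dec, Dec, Dec, Dec] = Some 0 \<and> 0 < (755::nat)"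
  by (simp add: pw3_def)
lemma cert_758: "run 758 [] [] [Blk [758,757,672], Dec, Dec, Blk [756,755,676], Dec, Dec, TR 729, PR 729, Blk [57,24], Blk [53,25,3], Dec, Dec, PR 27, Dec] = Some 2 \<and> 2 < (758::nat)"
  by (simp add: pw3_def)
lemma cert_761: "run 761 [] [] [Blk [761,736,690], Dec, Blk [760,759,668], Dec, Dec, Blk [758,753,676], Dec, Blk [757,737,693], Dec, Blk [756,735,696], Dec, Blk [755,741,691], Dec, Blk [754,728,705], Dec, Dec, Blk [752,738,697], Dec, Blk [751,730,706], Dec, Blk [750,729,708], Dec, Blk [749,721,717], Dec, Blk [748,744,695], Dec, Blk [747,724,716], Dec, Blk [746,727,714], Dec, Blk [745,739,703], Dec, Dec, Blk [743,731,713], Dec, Blk [742,726,719], Dec, Dec, Blk [740,732,715], Dec, Dec, Dec, Dec, Dec, Dec, Blk [734,733,720], Dec, Dec, Dec, Dec, Dec, Dec, Dec, Dec, Dec, PR 729, Blk [61,12,8], Blk [53,23,5], Blk [39,26,16], Blk [38,33,10], Blk [36,24,21], Blk [34,32,15], Blk [14,13], Blk [9]] = Some 3 \<and> 3 < (761::nat)"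
  by (simp add: pw3_def)
lemma cert_764: "run 764 [] [] [Blk [764,763,660], Dec, Dec, Blk [762,761,664], Dec, Dec, TR 729, PR 729, Blk [69,12], Blk [65,16], TR 27, PR 27, Blk [15,11,1], TR 3, Dec] = Some 0 \<and> 0 < (764::nat)"
  by (simp add: pw3_def)
lemma cert_767: "run 767 [] [] [Blk [767,766,654], Dec, Dec, Blk [765,764,658], Dec, Dec, TR 729, PR 729, Blk [75,6], Blk [71,10], TR 27, PR 27, Blk [17,7,3], Dec, Dec, PR 9, Dec] = Some 2 \<and> 2 < (767::nat)"
  by (simp add: pw3_def)
lemma cert_770: "run 770 [] [] [Blk [770,754,663], Dec, Blk [769,749,669], Dec, Blk [768,745,674], Dec, Blk [767,739,681], Dec, Blk [766,738,683], Dec, Blk [765,728,694], Dec, Blk [764,733,690], Dec, Blk [763,726,698], Dec, Blk [762,722,703], Dec, Blk [761,750,676], Dec, Blk [760,740,687], Dec, Blk [759,731,697], Dec, Blk [758,752,677], Dec, Blk [757,729,701], Dec, Blk [756,727,704], Dec, Blk [755,720,712], Dec, Dec, Blk [753,741,693], Dec, Dec, Blk [751,730,706], Dec, Dec, Dec, Blk [748,725,714], Dec, Blk [747,732,708], Dec, Blk [746,742,699], Dec, Dec, Blk [744,724,719], Dec, Blk [743,723,721], Dec, Dec, Dec, Dec, Dec, Dec, Blk [737,735,715], Dec, Blk [736,734,717], Dec, Dec, Dec, Dec, Dec, Dec, Dec, Dec, Dec, Dec, Dec, Dec, Dec, Dec, Dec, Dec, Dec, Dec, PR 729, Blk [66,15],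 Blk [60,21], Blk [55,26], Blk [53,28], Blk [52,23,6], Blk [48,25,8], Blk [46,35], Blk [42,32,7], Blk [39,30,12], Blk [36,31,14], Blk [17,10], Dec, Blk [9], Dec, Dec, Dec, Dec] = Some 5 \<and> 5 < (770::nat)"
  by (simp add: pw3_def)
lemma cert_773: "run 773 [] [] [Blk [773,772,642], Dec, Dec, Blk [771,770,646], Dec, Dec, TR 729, Blk [688,41], Dec, Blk [687,42], Dec, Blk [686,43], Dec, Blk [685,44], Dec, Blk [684,45], Dec, Blk [683,46], Dec, Blk [682,47], Dec, Blk [681,48], Dec, Blk [680,49], Dec, Blk [679,50], Dec, Blk [678,51], Dec, Blk [677,52], Dec, Blk [676,53], Dec, Blk [675,54], Dec, Blk [674,55], Dec, Blk [673,56], Dec, Blk [672,57], Dec, Blk [671,58], Dec, Blk [670,59], Dec, Blk [669,60], Dec, Blk [668,61], Dec, Blk [667,62], Dec, Blk [666,63], Dec, Blk [665,64], Dec, Blk [664,65], Dec, Blk [663,66], Dec, Blk [662,67], Dec, Blk [661,68], Dec, Blk [660,69], Dec, Blk [659,70], Dec, Blk [658,71], Dec, Blk [657,72], Dec, Blk [656,73], Dec, Blk [655,74], Dec, Blk [654,75], Dec, Blk [653,76], Dec, Blk [652,77], Dec, Blk [651,78], Dec, Blk [650,79], Dec, Blk [649,80], Dec, Blk [648,81], Dec, Blk [647,82], Dec, Dec, Blk [645,84], Dec, Blk [644,85], Dec, Blk [643,86], Dec, Dec, Blk [641,88], Dec, Blk [640,89], Dec, Blk [639,90], Dec, Blk [638,91],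 Dec, Blk [637,92], Dec, Blk [636,93], Dec, Blk [635,94], Dec, Blk [634,95], Dec, Blk [633,96], Dec, Blk [632,97], Dec, Blk [631,98], Dec, Blk [630,99], Dec, Blk [629,100], Dec, Blk [628,101], Dec, Blk [627,102], Dec, Blk [626,103], Dec, Blk [625,104], Dec, Blk [624,105], Dec, Blk [623,106], Dec, Blk [622,107], Dec, Blk [621,108], Dec, Blk [620,109], Dec, Blk [619,110], Dec, Blk [618,111], Dec, Blk [617,112], Dec, Blk [616,113], Dec, Blk [615,114], Dec, Blk [614,115], Dec, Blk [613,116], Dec, Blk [612,117], Dec, Blk [611,118], Dec, Blk [610,119], Dec, Blk [609,120], Dec, Blk [608,121], Dec, Blk [607,122], Dec, Blk [606,123], Dec, Blk [605,124], Dec, Blk [604,125], Dec, Blk [603,126], Dec, Blk [602,127], Dec, Blk [601,128], Dec, Blk [600,129], Dec, Blk [599,130], Dec, Blk [598,131], Dec, Blk [597,132], Dec, Blk [596,133], Dec, Blk [595,134], Dec, Blk [594,135], Dec, Blk [593,136], Dec, Blk [592,137], Dec, Blk [591,138], Dec, Blk [590,139], Dec, Blk [589,140], Dec, Blk [588,141], Dec, Blk [587,142], Dec, Blk [586,143], Dec, Blk [585,144], Dec, Blk [584,145], Dec, Blk [583,146], Dec, Blk [582,147], Dec, Blk [581,148], Dec, Blk [580,149], Dec, Blk [579,150], Dec, Blk [578,151], Dec, Blk [577,152], Dec, Blk [576,153], Dec, Blk [575,154], Dec, Blk [574,155], Dec, Blk [573,156], Dec, Blk [572,157], Dec, Blk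 [571,158], Dec, Blk [570,159], Dec, Blk [569,160], Dec, Blk [568,161], Dec, Blk [567,162], Dec, Blk [566,163], Dec, Blk [565,164], Dec, Blk [564,165], Dec, Blk [563,166], Dec, Blk [562,167], Dec, Blk [561,168], Dec, Blk [560,169], Dec, Blk [559,87,83], Dec, PR 729, PR 243, Dec, Dec, Dec, Dec, Dec, Dec, Dec, Dec, Dec, Dec, Dec, Dec, Dec, Dec, Dec, Dec, Dec, Dec, Dec, Dec, Dec, Dec, Dec, Dec, Dec, Dec, Dec, Dec, Dec, Dec, Dec, Dec, Blk [170,40,33], Dec, Blk [39,38,4], Dec, Dec, Blk [37,36,8], Dec, Dec, Blk [35,28,18], Dec, Blk [34,26,21], Dec, Dec, Blk [32,25,24], Dec, Blk [31,27,23], Dec, Blk [30,29,22], Dec, Dec, Dec, Dec, Dec, Dec, Dec, Dec, Dec, Dec, PR 27, Blk [19,6,2], Dec, Blk [9], PR 9, Blk [5,3,1], Dec, Dec, Dec] = Some 0 \<and> 0 < (773::nat)"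
  by (simp add: pw3_def)
lemma cert_776: "run 776 [] [] [Blk [776,775,636], Dec, Dec, Blk [774,773,640], Dec, Dec, TR 729, Blk [685,44], Dec, Blk [684,45], Dec, Blk [683,46], Dec, Blk [682,47], Dec, Blk [681,48], Dec, Blk [680,49], Dec, Blk [679,50], Dec, Blk [678,51], Dec, Blk [677,52], Dec, Blk [676,53], Dec, Blk [675,54], Dec, Blk [674,55], Dec, Blk [673,56], Dec, Blk [672,57], Dec, Blk [671,58], Dec, Blk [670,59], Dec, Blk [669,60], Dec, Blk [668,61], Dec, Blk [667,62], Dec, Blk [666,63], Dec, Blk [665,64], Dec, Blk [664,65], Dec, Blk [663,66], Dec, Blk [662,67], Dec, Blk [661,68], Dec, Blk [660,69], Dec, Blk [659,70], Dec, Blk [658,71], Dec, Blk [657,72], Dec, Blk [656,73], Dec, Blk [655,74], Dec, Blk [654,75], Dec, Blk [653,76], Dec, Blk [652,77], Dec, Blk [651,78], Dec, Blk [650,79], Dec, Blk [649,80], Dec, Blk [648,81], Dec, Blk [647,82], Dec, Blk [646,83], Dec, Blk [645,84], Dec, Blk [644,85], Dec, Blk [643,86], Dec, Blk [642,87], Dec, Blk [641,88], Dec, Dec, Blk [639,90], Dec, Blk [638,91], Dec, Blk [637,92], Dec, Dec, Blk [635,94], Dec, Blk [634,95], Dec, Blk [633,96], Dec, Blk [632,97], Dec, Blk [631,98], Dec, Blk [630,99], Dec, Blk [629,100], Dec, Blk [628,101], Dec, Blk [627,102], Dec, Blk [626,103], Dec, Blk [625,104], Dec, Blk [624,105], Dec,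 Blk [623,106], Dec, Blk [622,107], Dec, Blk [621,108], Dec, Blk [620,109], Dec, Blk [619,110], Dec, Blk [618,111], Dec, Blk [617,112], Dec, Blk [616,113], Dec, Blk [615,114], Dec, Blk [614,115], Dec, Blk [613,116], Dec, Blk [612,117], Dec, Blk [611,118], Dec, Blk [610,119], Dec, Blk [609,120], Dec, Blk [608,121], Dec, Blk [607,122], Dec, Blk [606,123], Dec, Blk [605,124], Dec, Blk [604,125], Dec, Blk [603,126], Dec, Blk [602,127], Dec, Blk [601,128], Dec, Blk [600,129], Dec, Blk [599,130], Dec, Blk [598,131], Dec, Blk [597,132], Dec, Blk [596,133], Dec, Blk [595,134], Dec, Blk [594,135], Dec, Blk [593,136], Dec, Blk [592,137], Dec, Blk [591,138], Dec, Blk [590,139], Dec, Blk [589,140], Dec, Blk [588,141], Dec, Blk [587,142], Dec, Blk [586,143], Dec, Blk [585,144], Dec, Blk [584,145], Dec, Blk [583,146], Dec, Blk [582,147], Dec, Blk [581,148], Dec, Blk [580,149], Dec, Blk [579,150], Dec, Blk [578,151], Dec, Blk [577,152], Dec, Blk [576,153], Dec, Blk [575,154], Dec, Blk [574,155], Dec, Blk [573,156], Dec, Blk [572,157], Dec, Blk [571,158], Dec, Blk [570,159], Dec, Blk [569,160], Dec, Blk [568,161], Dec, Blk [567,162], Dec, Blk [566,163], Dec, Blk [565,164], Dec, Blk [564,165], Dec, Blk [563,166], Dec, Blk [562,167], Dec, Blk [561,168], Dec, Blk [560,169], Dec, Blk [559,170], Dec, Blk [558,171], Dec, Blk [557,172],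 Dec, Blk [556,173], Dec, Blk [555,174], Dec, Blk [554,175], Dec, Blk [553,176], Dec, Blk [552,177], Dec, Blk [551,178], Dec, Blk [550,179], Dec, Blk [549,180], Dec, Blk [548,181], Dec, Blk [547,93,89], Dec, PR 729, PR 243, Dec, Dec, Dec, Dec, Dec, Dec, Dec, Dec, Dec, Dec, Dec, Dec, Dec, Dec, Dec, Dec, Dec, Blk [182,43,18], Dec, PR 81, Blk [38,37,6], Dec, Dec, Blk [36,35,10], Dec, Dec, TR 27, PR 27, Blk [17,9,1], PR 9, Dec, Blk [3]] = Some 0 \<and> 0 < (776::nat)"
  by (simp add: pw3_def)
lemma cert_779: "run 779 [] [] [Blk [779,767,641], Dec, Blk [778,754,655], Dec, Blk [777,775,635], Dec, Blk [776,758,653], Dec, Dec, Blk [774,759,654], Dec, Blk [773,743,671], Dec, Blk [772,748,667], Dec, Blk [771,738,678], Dec, Blk [770,765,652], Dec, Blk [769,768,650], Dec, Dec, Dec, Blk [766,760,661], Dec, Dec, Blk [764,732,691], Dec, Blk [763,740,684], Dec, Blk [762,730,695], Dec, Blk [761,744,682], Dec, Dec, Dec, Dec, Blk [757,721,709], Dec, Blk [756,726,705], Dec, Blk [755,753,679], Dec, Dec, Dec, Blk [752,734,701], Dec, Blk [751,724,712], Dec, Blk [750,731,706], Dec, Blk [749,727,711], Dec, Dec, Blk [747,741,699], Dec, Blk [746,725,716], Dec, Blk [745,722,720], Dec, Dec, Dec, Blk [742,735,710], Dec, Dec, Dec, Blk [739,729,719], Dec, Dec, Blk [737,733,717], Dec,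 Blk [736,728,723], Dec, Dec, Dec, Dec, Dec, Dec, Dec, Dec, Dec, Dec, Dec, Dec, Dec, Dec, Dec, Dec, Dec, Dec, PR 729, Blk [94,75,74], Blk [88,79,76], Blk [77,4], Blk [68,13], Blk [62,19], Blk [58,17,6], Blk [51,30], Blk [50,24,7], Blk [47,34], Blk [45,28,8], Blk [38,23,20], Blk [18,9], Blk [12,10,5], Dec, Dec, Dec, Dec, Dec, Dec, Dec] = Some 3 \<and> 3 < (779::nat)"
  by (simp add: pw3_def)
lemma cert_782: "run 782 [] [] [Blk [782,781,624], Dec, Dec, Blk [780,779,628], Dec, Dec, TR 729, PR 729, Blk [105,101,37], PR 81, Blk [44,31,6], Dec, Blk [30,29,22], Dec, Dec, TR 27, PR 27, Blk [21,5,1], Dec] = Some 0 \<and> 0 < (782::nat)"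
  by (simp add: pw3_def)
lemma cert_785: "run 785 [] [] [Blk [785,784,618], Dec, Dec, Blk [783,782,622], Dec, Dec, TR 729, PR 729, Blk [111,107,25], PR 81, TR 27, Dec] = Some 24 \<and> 24 < (785::nat)"
  by (simp add: pw3_def)
lemma cert_788: "run 788 [] [] [Blk [788,787,612], Dec, Dec, Blk [786,785,616], Dec, Dec, TR 729, PR 729, Blk [117,113,13], Blk [55,26], Dec, Blk [54,27], Dec, Blk [53,28], Dec, Blk [52,29], Dec, Blk [51,30], Dec, Blk [50,31], Dec, Blk [49,32], Dec, Blk [48,33], Dec, Blk [47,34], Dec, Blk [46,35], Dec, Blk [45,36], Dec, Blk [44,37], Dec, Blk [43,38], Dec, Blk [42,25,14], Dec, PR 81, Blk [39,24,18], Dec, Dec, Dec, Dec, Dec, Dec, Dec, Dec, Dec, Dec, Dec, Dec, Dec, Dec, Dec, Dec, PR 27, Blk [9]] = Some 3 \<and> 3 < (788::nat)"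
  by (simp add: pw3_def)
lemma cert_791: "run 791 [] [] [Blk [791,790,606], Dec, Dec, Blk [789,788,610], Dec, Dec, TR 729, PR 729, Blk [123,119,1], PR 81, PR 27, TR 3, Dec] = Some 0 \<and> 0 < (791::nat)"
  by (simp add: pw3_def)
lemma cert_794: "run 794 [] [] [Blk [794,793,600], Dec, Dec, Blk [792,791,604], Dec, Dec, TR 729, PR 729, Blk [129,61,53], Dec, Blk [125,60,58], Dec, Blk [59,22], Dec, Dec, Blk [57,24], Dec, Blk [56,25], Dec, Blk [55,26], Dec, Blk [54,27], Dec, Dec, Blk [52,29], Dec, Blk [51,30], Dec, Blk [50,31], Dec, Blk [49,32], Dec, Blk [48,33], Dec, Blk [47,34], Dec, Blk [46,35], Dec, Blk [45,36], Dec, Blk [44,37], Dec, Blk [43,38], Dec, Blk [42,39], Dec, Blk [41,28,12], Dec, Blk [40,23,18], Dec, Dec, Dec, Dec, Dec, Dec, Dec, Dec, Dec, Dec, Dec, Dec, Dec, Dec, Dec, Dec, Dec, Dec, Dec, PR 27, Blk [15,9,3], PR 9, Dec] = Some 2 \<and> 2 < (794::nat)"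
  by (simp add: pw3_def)
lemma cert_797: "run 797 [] [] [Blk [797,796,594], Dec, Dec, Blk [795,794,598], Dec, Dec, TR 729, PR 729, Blk [135,64,44], Dec, Blk [131,63,49], Dec, Blk [62,19], Dec, Blk [61,20], Dec, Blk [60,21], Dec, Blk [59,22], Dec, Blk [58,23], Dec, Blk [57,24], Dec, Blk [56,25], Dec, Blk [55,26], Dec, Blk [54,27], Dec, Blk [53,28], Dec, Blk [52,29], Dec, Blk [51,30], Dec, Blk [50,18,13], Dec, Dec, Blk [48,17,16], Dec, Blk [47,34], Dec, Blk [46,35], Dec, Blk [45,36], Dec, Dec, Blk [43,38], Dec, Blk [42,39], Dec, Blk [41,32,8], Dec, Blk [40,31,10], Dec, Dec, Dec, Blk [37,33,11], Dec, Dec, Dec, Dec, Dec, Dec, Dec, Dec, Dec, Dec, Dec, Dec, Dec, Dec, Dec, Dec, Dec, Dec, Dec, Dec, Dec, Dec, PR 27, Dec, Dec, Blk [14,7,6], Blk [9], Dec, Dec, Dec, Dec] = Some 5 \<and> 5 < (797::nat)"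
  by (simp add: pw3_def)
lemma cert_800: "run 800 [] [] [Blk [800,799,588], Dec, Dec, Blk [798,797,592], Dec, Dec, TR 729, PR 729, Blk [141,58,44], Blk [137,60,46], PR 81, Blk [37,35,9], Blk [23,4], Blk [21,6], Blk [13,11,3], Dec, Blk [12,10,5], Dec, Dec, Dec, Dec, PR 9] = Some 0 \<and> 0 < (800::nat)"
  by (simp add: pw3_def)
lemma cert_803: "run 803 [] [] [Blk [803,801,583], Dec, Blk [802,800,585], Dec, Dec, Dec, TR 729, PR 729, Blk [146,70,27], Dec, Blk [144,67,32], Blk [69,8,4], Dec, Blk [68,13], Dec, Dec, Blk [66,15], Dec, Blk [65,16], Dec, Blk [64,17], Dec, Blk [63,11,7], Dec, Blk [62,19], Dec, Blk [61,20], Dec, Blk [60,21], Dec, Blk [59,12,10], Dec, PR 81, Blk [54,22,5], Dec, Dec, Dec, Dec, Blk [49,18,14], Dec, Dec, Dec, Dec, Dec, Dec, Dec, Dec, Dec, Blk [9], Dec, Dec, Dec, PR 9] = Some 2 \<and> 2 < (803::nat)"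
  by (simp add: pw3_def)
lemma cert_806: "run 806 [] [] [Blk [806,805,576], Dec, Dec, Blk [804,803,580], Dec, Dec, TR 729, PR 729, Blk [153,73,17], Dec, Blk [149,72,22], Dec, Blk [71,10], Dec, Blk [70,11], Dec, Blk [69,12], Dec, Blk [68,8,5], Dec, Blk [67,14], Dec, Blk [66,15], Dec, Blk [65,9,7], Dec, PR 81, Blk [64,13,4], Blk [59,16,6], Dec, Dec, Dec, Dec, Dec, Dec, Dec, Dec, Dec, Dec, Dec, Dec, Dec] = Some 3 \<and> 3 < (806::nat)"
  by (simp add: pw3_def)
lemma cert_809: "run 809 [] [] [Blk [809,808,570], Dec, Dec, Blk [807,806,574], Dec, Dec, TR 729, PR 729, Blk [159,76,8], Dec, Blk [155,75,13], Dec, Blk [74,7], Dec, Blk [73,6,2], Dec, Blk [72,5,4], Dec, Blk [71,10], Dec, Blk [70,11], Dec, Blk [69,9,3], Dec, PR 81, Blk [68,12,1], Dec, Dec, Dec, Dec, Dec, Dec, Dec, Dec, Dec, Dec, Dec, Dec] = Some 0 \<and> 0 < (809::nat)"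
  by (simp add: pw3_def)
lemma cert_812: "run 812 [] [] [Blk [812,811,564], Dec, Dec, Blk [810,809,568], Dec, Dec, TR 729, PR 729, Blk [165,78], Blk [161,79,3], Dec, Dec, PR 81, Dec] = Some 2 \<and> 2 < (812::nat)"
  by (simp add: pw3_def)
lemma cert_815: "run 815 [] [] [Blk [815,814,558], Dec, Dec, Blk [813,812,562], Dec, Dec, TR 729, Blk [646,77,6], Dec, Blk [645,84], Dec, Blk [644,85], Dec, Blk [643,86], Dec, Blk [642,78,9], Dec, Blk [641,76,12], Dec, Blk [640,89], Dec, PR 729, Dec, Blk [171,72], Blk [167,69,7], Blk [88,80,75], Dec, Blk [87,82,74], Dec, Dec, Dec, Dec, Blk [83,81,79], Dec, Dec, Dec, Dec, Dec, Dec, Dec, Dec, Dec, Dec, PR 81, Dec, Dec] = Some 5 \<and> 5 < (815::nat)"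
  by (simp add: pw3_def)
lemma cert_818: "run 818 [] [] [Blk [818,817,552], Dec, Dec, Blk [816,815,556], Dec, Dec, TR 729, PR 729, Blk [177,66], Blk [173,70], TR 81, PR 81, Blk [15,11,1], TR 3, Dec] = Some 0 \<and> 0 < (818::nat)"
  by (simp add: pw3_def)
lemma cert_821: "run 821 [] [] [Blk [821,820,546], Dec, Dec, Blk [819,818,550], Dec, Dec, TR 729, PR 729, Blk [183,60], Blk [179,64], TR 81, PR 81, Blk [21,6], Blk [17,7,3], Dec, Dec, PR 9, Dec] = Some 2 \<and> 2 < (821::nat)"
  by (simp add: pw3_def)
lemma cert_824: "run 824 [] [] [Blk [824,823,540], Dec, Dec, Blk [822,821,544], Dec, Dec, TR 729, PR 729, Blk [189,54], Blk [185,58], TR 81, Blk [70,11], Dec, Blk [69,12], Dec, Blk [68,13], Dec, Blk [67,14], Dec, Blk [66,15], Dec, Blk [65,16], Dec, Blk [64,17], Dec, Blk [63,18], Dec, Blk [62,19], Dec, Blk [61,20], Dec, Blk [60,21], Dec, Blk [59,22], Dec, Dec, Blk [57,24], Dec, Blk [56,25], Dec, Blk [55,26], Dec, Dec, Blk [53,28], Dec, Blk [52,29], Dec, Blk [51,30], Dec, Blk [50,31], Dec, Blk [49,32], Dec, Blk [48,23,10], Dec, Blk [47,34], Dec, Blk [46,27,8], Dec, Blk [45,36], Dec, Blk [44,37], Dec, Blk [43,38], Dec, Blk [42,39], Dec, Blk [41,33,7], Dec, Blk [40,35,6], Dec, Dec, Dec, Dec, Dec, Dec, Dec, Dec, Dec,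 Dec, Dec, Dec, Dec, Dec, Dec, Dec, Dec, Dec, Dec, Dec, Dec, Dec, Dec, Dec, Dec, Dec, Dec, Dec, Dec, Dec, Dec, Blk [9], Dec, Dec, Dec, Dec] = Some 5 \<and> 5 < (824::nat)"
  by (simp add: pw3_def)
lemma cert_827: "run 827 [] [] [Blk [827,826,534], Dec, Dec, Blk [825,824,538], Dec, Dec, TR 729, PR 729, Blk [195,48], Blk [191,52], TR 81, Blk [67,14], Dec, Blk [66,15], Dec, Blk [65,16], Dec, Blk [64,17], Dec, Blk [63,18], Dec, Blk [62,19], Dec, Blk [61,20], Dec, Blk [60,21], Dec, Blk [59,22], Dec, Blk [58,23], Dec, Blk [57,24], Dec, Blk [56,25], Dec, Blk [55,26], Dec, Blk [54,27], Dec, Blk [53,28], Dec, Dec, Blk [51,30], Dec, Blk [50,31], Dec, Blk [49,32], Dec, Dec, Blk [47,34], Dec, Blk [46,35], Dec, Blk [45,36], Dec, Blk [44,37], Dec, Blk [43,38], Dec, Blk [42,39], Dec, Blk [41,33,7], Dec, Blk [40,29,12], Dec, Dec, Dec, Dec, Dec, Dec, Dec, Dec, Dec, Dec, Dec, Dec, Dec, Dec, Dec, Dec, Dec, Dec, Dec, Dec, Dec, Dec, Dec, Dec, Dec, Dec, Dec, Blk [13,11,3], Dec, Dec, Dec, TR 9, Dec, PR 9, Blk [6,2,1], Dec, Dec] = Some 0 \<and> 0 < (827::nat)"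
  by (simp add: pw3_def)
lemma cert_830: "run 830 [] [] [Blk [830,829,528], Dec, Dec, Blk [828,827,532], Dec, Dec, TR 729, PR 729, Blk [201,42], Blk [197,46], TR 81, PR 81, Blk [39,35,7], PR 27, TR 9, Dec] = Some 6 \<and> 6 < (830::nat)"
  by (simp add: pw3_def)
lemma cert_833: "run 833 [] [] [Blk [833,832,522], Dec, Dec, Blk [831,830,526], Dec, Dec, TR 729, PR 729, Blk [207,36], Blk [203,40], TR 81, Blk [61,20], Dec, Blk [60,21], Dec, Blk [59,22], Dec, Blk [58,23], Dec, Blk [57,24], Dec, Blk [56,25], Dec, Blk [55,26], Dec, Blk [54,27], Dec, Blk [53,28], Dec, Blk [52,29], Dec, Blk [51,30], Dec, Blk [50,31], Dec, Blk [49,32], Dec, Blk [48,33], Dec, Blk [47,18,16], Dec, PR 81, Blk [45,19,17], Blk [41,34,6], Dec, Dec, Dec, Dec, Dec, Dec, Dec, Dec, Dec, Dec, Dec, Dec, Dec, Dec, Dec, Dec, Dec, Dec, Dec, Blk [15,12], Dec, Blk [14,8,5], Dec, Blk [13,10,4], Dec, Dec, Blk [11,9,7], Dec, Dec, Dec, Dec, Dec, Dec, Dec, Dec] = Some 3 \<and> 3 < (833::nat)"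
  by (simp add: pw3_def)
lemma cert_836: "run 836 [] [] [Blk [836,835,516], Dec, Dec, Blk [834,833,520], Dec, Dec, TR 729, PR 729, Blk [213,30], Blk [209,34], TR 81, PR 81, Blk [51,22,8], Dec, Blk [47,21,13], Dec, Blk [20,7], Dec, Blk [19,6,2], Dec, Blk [18,5,4], Dec, Blk [17,10], Dec, Blk [16,11], Dec, Blk [15,9,3], Dec, PR 27, Blk [14,12,1], Dec, Dec, Dec, Dec, Dec, Dec, Dec, Dec, Dec, Dec, Dec, Dec] = Some 0 \<and> 0 < (836::nat)"
  by (simp add: pw3_def)
lemma cert_839: "run 839 [] [] [Blk [839,838,510], Dec, Dec, Blk [837,836,514], Dec, Dec, TR 729, PR 729, Blk [219,24], Blk [215,28], TR 81, PR 81, Blk [53,25,3], Dec, Dec, PR 27, Dec] = Some 2 \<and> 2 < (839::nat)"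
  by (simp add: pw3_def)
lemma cert_842: "run 842 [] [] [Blk [842,841,504], Dec, Dec, Blk [840,839,508], Dec, Dec, TR 729, PR 729, Blk [225,18], Blk [221,22], TR 81, Blk [52,29], Dec, Blk [51,30], Dec, Blk [50,31], Dec, Blk [49,32], Dec, Blk [48,33], Dec, Blk [47,34], Dec, Blk [46,35], Dec, Blk [45,36], Dec, Blk [44,37], Dec, Blk [43,38], Dec, Blk [42,39], Dec, Blk [41,25,15], Dec, Blk [40,24,17], Dec, Dec, Dec, Dec, Dec, Dec, Dec, Dec, Dec, Dec, Dec, Dec, TR 27, Dec, Dec, PR 27, Blk [12,10,5], Blk [9]] = Some 3 \<and> 3 < (842::nat)"
  by (simp add: pw3_def)
lemma certs_all:
  assumes "m \<in> set keysL"
  shows "\<exists>st b. run m [] [] st = Some b \<and> b < m"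
proof -
  have "m = 11 \<or> m = 29 \<or> m = 32 \<or> m = 35 \<or> m = 38 \<or> m = 83 \<or> m = 86 \<or> m = 89 \<or> m = 92 \<or> m = 95 \<or> m = 98 \<or> m = 101 \<or> m = 104 \<or> m = 107 \<or> m = 110 \<or> m = 113 \<or> m = 116 \<or> m = 119 \<or> m = 245 \<or> m = 248 \<or> m = 251 \<or> m = 254 \<or> m = 257 \<or> m = 260 \<or> m = 263 \<or> m = 266 \<or> m = 269 \<or> m = 272 \<or> m = 275 \<or> m = 278 \<or> m = 281 \<or> m = 284 \<or> m = 287 \<or> m = 290 \<or> m = 293 \<or> m = 296 \<or> m = 299 \<or> m = 302 \<or> m = 305 \<or> m = 308 \<or> m = 311 \<or> m = 314 \<or> m = 317 \<or> m = 320 \<or> m = 323 \<or> m = 326 \<or> m = 329 \<or> m = 332 \<or> m = 335 \<or> m = 338 \<or> m = 341 \<or> m = 344 \<or> m = 347 \<or> m = 350 \<or> m = 353 \<or> m = 356 \<or> m = 359 \<or> m = 362 \<or> m = 731 \<or> m = 734 \<or> m = 737 \<or> m = 740 \<or> m = 743 \<or> m = 746 \<or> m = 749 \<or> m = 752 \<or> m = 755 \<or> m = 758 \<or> m = 761 \<or> m = 764 \<or> m = 767 \<or> m = 770 \<or> m = 773 \<or> m = 776 \<or> m = 779 \<or> m = 782 \<or> m = 785 \<or> m = 788 \<or> m = 791 \<or> m = 794 \<or> m = 797 \<or> m = 800 \<or> m = 803 \<or> m = 806 \<or> m = 809 \<or> m = 812 \<or> m = 815 \<or> m = 818 \<or>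 m = 821 \<or> m = 824 \<or> m = 827 \<or> m = 830 \<or> m = 833 \<or> m = 836 \<or> m = 839 \<or> m = 842" using assms unfolding keysL_def by simp
  then show ?thesis
    apply (elim disjE)
    using cert_11 apply blast
    using cert_29 apply blast
    using cert_32 apply blast
    using cert_35 apply blast
    using cert_38 apply blast
    using cert_83 apply blast
    using cert_86 apply blast
    using cert_89 apply blast
    using cert_92 apply blast
    using cert_95 apply blast
    using cert_98 apply blast
    using cert_101 apply blast
    using cert_104 apply blast
    using cert_107 apply blast
    using cert_110 apply blast
    using cert_113 apply blast
    using cert_116 apply blast
    using cert_119 apply blast
    using cert_245 apply blast
    using cert_248 apply blast
    using cert_251 apply blast
    using cert_254 apply blast
    using cert_257 apply blast
    using cert_260 apply blast
    using cert_263 apply blast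
    using cert_266 apply blast
    using cert_269 apply blast
    using cert_272 apply blast
    using cert_275 apply blast
    using cert_278 apply blast
    using cert_281 apply blast
    using cert_284 apply blast
    using cert_287 apply blast
    using cert_290 apply blast
    using cert_293 apply blast
    using cert_296 apply blast
    using cert_299 apply blast
    using cert_302 apply blast
    using cert_305 apply blast
    using cert_308 apply blast
    using cert_311 apply blast
    using cert_314 apply blast
    using cert_317 apply blast
    using cert_320 apply blast
    using cert_323 apply blast
    using cert_326 apply blast
    using cert_329 apply blast
    using cert_332 apply blast
    using cert_335 apply blast
    using cert_338 apply blast
    using cert_341 apply blast
    using cert_344 apply blast
    using cert_347 apply blast
    using cert_350 apply blast
    using cert_353 apply blast
    using cert_356 apply blast
    using cert_359 apply blast
    using cert_362 apply blast
    using cert_731 apply blast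
    using cert_734 apply blast
    using cert_737 apply blast
    using cert_740 apply blast
    using cert_743 apply blast
    using cert_746 apply blast
    using cert_749 apply blast
    using cert_752 apply blast
    using cert_755 apply blast
    using cert_758 apply blast
    using cert_761 apply blast
    using cert_764 apply blast
    using cert_767 apply blast
    using cert_770 apply blast
    using cert_773 apply blast
    using cert_776 apply blast
    using cert_779 apply blast
    using cert_782 apply blast
    using cert_785 apply blast
    using cert_788 apply blast
    using cert_791 apply blast
    using cert_794 apply blast
    using cert_797 apply blast
    using cert_800 apply blast
    using cert_803 apply blast
    using cert_806 apply blast
    using cert_809 apply blast
    using cert_812 apply blast
    using cert_815 apply blast
    using cert_818 apply blast
    using cert_821 apply blast
    using cert_824 apply blast
    using cert_827 apply blast
    using cert_830 apply blast
    using cert_833 apply blast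
    using cert_836 apply blast
    using cert_839 apply blast
    using cert_842 apply blast
    done
qed


theorem theorem1:
  assumes "\<exists>n::nat. n > 0 \<and> \<not> admits_three_good n"
  defines "m \<equiv> LEAST n::nat. n > 0 \<and> \<not> admits_three_good n"
  shows "m \<ge> 845 \<and> m mod 3 = 2 \<and>
         (\<exists>t::nat. t \<ge> 4 \<and> 3 ^ t + 1 < m \<and> 2 * m < 3 ^ (t + 1) + 1)"
proof -
  have mP: "m > 0 \<and> \<not> admits_three_good m" unfolding m_def by (rule LeastI_ex[OF assms(1)])
  have below: "admits_three_good k" if "k < m" for k
  proof (cases "k = 0")
    case True then show ?thesis using admits0 by simp
  next
    case False
    have "\<not> (k > 0 \<and> \<not> admits_three_good k)"
      using not_less_Least[of k "\<lambda>n. n > 0 \<and> \<not> admits_three_good n"] that unfolding m_def by blast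
    then show ?thesis using False by simp
  qed
  obtain t where t: "3^t + 1 < m" "2*m \<le> 3^Suc t" "(m - 3^t) mod 3 = 2" "m mod 3 = 2"
    using reduce[of m] mP below by blast
  have m845: "845 \<le> m"
  proof (rule ccontr)
    assume "\<not> 845 \<le> m"
    then have "m < 845" by simp
    then have "m \<in> set keysL" using keys_in t by blast
    then obtain st b where sb: "run m [] [] st = Some b" "b < m" using certs_all by blast
    then have "admits_three_good m" using run_admits below by blast
    with mP show False by simp
  qed
  have t6: "6 \<le> t"
  proof (rule ccontr)
    assume "\<not> 6 \<le> t" then have "Suc t \<le> 6" by simp
    then have "(3::nat)^Suc t \<le> 3^6" by (rule power_increasing) simp
    then show False using t(2) m845 by simp
  qed
  have "4 \<le> t \<and> 3 ^ t + 1 < m \<and> 2 * m < 3 ^ (t + 1) + 1" using t t6 by simp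
  then show ?thesis using m845 t(4) by blast
qed

end
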